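(* Every strictly supersolvable locally geometric poset is inductive.
   Context: All posets are finite, have a unique minimal element $\hat 0$, and are ranked (for every $x$ all maximal chains with top $x$ have the same length $\operatorname{rk}(x)$); $\operatorname{rk}(\mathcal{P}):=\max_x\operatorname{rk}(x)$. Characteristic polynomial: $\chi_{\mathcal{P}}(t)=\sum_{x}\mu(\hat0,x)t^{\operatorname{rk}(\mathcal{P})-\operatorname{rk}(x)}$, $\mu$ the Möbius function. $A(\mathcal{P})$ is the set of atoms (rank-1 elements). For $T\subseteq\mathcal{P}$, $\bigvee T$ is the set of minimal upper bounds of $T$; $x\vee y:=\bigvee\{x,y\}$. A lattice is geometric if for all $x,y$: $y$ covers $x$ iff there is an atom $a\not\le x$ with $y=x\vee a$. $\mathcal{P}$ is locally geometric if every $\mathcal{P}_{\le x}$ is a geometric lattice. An element $x$ of a geometric lattice $L$ is modular if $x\wedge(y\vee z)=(x\wedge y)\vee z$ for all $z\le x$, $y\in L$. For $B\subseteq A(\mathcal{P})$, $\mathcal{P}(B)$ is the subposet consisting of $\hat 0$ and all elements of $\bigvee T$ for nonempty $T\subseteq B$. An order ideal $\mathcal{Q}$ is pure if all its maximal elements have the same rank, and join-closed if $T\subseteq\mathcal{Q}$ implies $\bigvee T\subseteq\mathcal{Q}$. An M-ideal of a locally geometric $\mathcal{P}$ is a pure, join-closed order ideal $\mathcal{Q}$ with (1) $|a\vee y|\ge1$ for all $y\in\mathcal{Q}$, $a\in A(\mathcal{P})\setminus A(\mathcal{Q})$, and (2) for every maximal $x\in\mathcal{P}$ there is a maximal $y\in\mathcal{Q}$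 that is modular in $\mathcal{P}_{\le x}$. A TM-ideal is an M-ideal satisfying the stronger (1* ) $|a\vee y|=1$ for all such $y,a$. $\mathcal{P}$ is strictly supersolvable if there is a chain $\{\hat0\}=\mathcal{Q}_0\subsetneq\mathcal{Q}_1\subsetneq\cdots\subsetneq\mathcal{Q}_r=\mathcal{P}$ with each $\mathcal{Q}_i$ a TM-ideal of $\mathcal{Q}_{i+1}$ and $\operatorname{rk}(\mathcal{Q}_i)=i$. For an atom $a$, let $\mathcal{P}':=\mathcal{P}(A(\mathcal{P})\setminus\{a\})$ and $\mathcal{P}'':=\mathcal{P}_{\ge a}$ (minimal element $a$, rank function $\operatorname{rk}-1$). The class of inductive posets is the smallest class of locally geometric posets such that (1) $\{\hat0\}$ is inductive, and (2) $\mathcal{P}$ is inductive whenever there is an atom $a$ with $\mathcal{P}''$ and $\mathcal{P}'$ inductive and $\chi_{\mathcal{P}''}(t)$ dividing $\chi_{\mathcal{P}'}(t)$. *)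

theory Defs
  imports "HOL-Computational_Algebra.Polynomial"
begin

text \<open>A poset is given by a carrier set P together with an order relation le
(only its restriction to P matters).  Subposets (order ideals, P(B), P_{>=a})
are subsets of the carrier with the restricted order.\<close>

definition lt :: "('a \<Rightarrow> 'a \<Rightarrow> bool) \<Rightarrow> 'a \<Rightarrow> 'a \<Rightarrow> bool" where
  "lt le x y \<longleftrightarrow> le x y \<and> x \<noteq> y"

definition covers :: "('a \<Rightarrow> 'a \<Rightarrow> bool) \<Rightarrow> 'a set \<Rightarrow> 'a \<Rightarrow> 'a \<Rightarrow> bool" where
  "covers le P x y \<longleftrightarrow> x \<in> P \<and> y \<in> P \<and> lt le x y \<and> \<not> (\<exists>z\<in>P. lt le x z \<and> lt le z y)"

definition minimal_elems :: "('a \<Rightarrow> 'a \<Rightarrow> bool) \<Rightarrow> 'a set \<Rightarrow> 'a set" where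
  "minimal_elems le P = {x\<in>P. \<not> (\<exists>y\<in>P. lt le y x)}"

definition maximal_elems :: "('a \<Rightarrow> 'a \<Rightarrow> bool) \<Rightarrow> 'a set \<Rightarrow> 'a set" where
  "maximal_elems le P = {x\<in>P. \<not> (\<exists>y\<in>P. lt le x y)}"

definition bot :: "('a \<Rightarrow> 'a \<Rightarrow> bool) \<Rightarrow> 'a set \<Rightarrow> 'a" where
  "bot le P = (THE z. z \<in> minimal_elems le P)"

definition satchain :: "('a \<Rightarrow> 'a \<Rightarrow> bool) \<Rightarrow> 'a set \<Rightarrow> 'a list \<Rightarrow> 'a \<Rightarrow> bool" where
  "satchain le P cs x \<longleftrightarrow> cs \<noteq> [] \<and> hd cs = bot le P \<and> last cs = x \<and> set cs \<subseteq> P \<and>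
     (\<forall>i. Suc i < length cs \<longrightarrow> covers le P (cs ! i) (cs ! Suc i))"

definition is_poset :: "('a \<Rightarrow> 'a \<Rightarrow> bool) \<Rightarrow> 'a set \<Rightarrow> bool" where
  "is_poset le P \<longleftrightarrow> finite P \<and>
     (\<forall>x\<in>P. le x x) \<and>
     (\<forall>x\<in>P. \<forall>y\<in>P. le x y \<and> le y x \<longrightarrow> x = y) \<and>
     (\<forall>x\<in>P. \<forall>y\<in>P. \<forall>z\<in>P. le x y \<and> le y z \<longrightarrow> le x z) \<and>
     (\<exists>!z. z \<in> minimal_elems le P) \<and>
     (\<forall>x\<in>P. \<forall>cs ds. satchain le P cs x \<and> satchain le P ds x \<longrightarrow> length cs = length ds)"

definition rk :: "('a \<Rightarrow> 'a \<Rightarrow> bool) \<Rightarrow> 'a set \<Rightarrow> 'a \<Rightarrow> nat" where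
  "rk le P x = (SOME n. \<exists>cs. satchain le P cs x \<and> length cs = Suc n)"

definition rank :: "('a \<Rightarrow> 'a \<Rightarrow> bool) \<Rightarrow> 'a set \<Rightarrow> nat" where
  "rank le P = Max (rk le P ` P)"

definition is_mobius :: "('a \<Rightarrow> 'a \<Rightarrow> bool) \<Rightarrow> 'a set \<Rightarrow> ('a \<Rightarrow> 'a \<Rightarrow> int) \<Rightarrow> bool" where
  "is_mobius le P m \<longleftrightarrow>
     (\<forall>x y. (x \<notin> P \<or> y \<notin> P) \<longrightarrow> m x y = 0) \<and>
     (\<forall>x\<in>P. \<forall>y\<in>P. m x y =
        (if x = y then 1
         else if lt le x y then - (\<Sum>z\<in>{z\<in>P. le x z \<and> lt le z y}. m x z)
         else 0))"

definition mobius :: "('a \<Rightarrow> 'a \<Rightarrow> bool) \<Rightarrow> 'a set \<Rightarrow> 'a \<Rightarrow> 'a \<Rightarrow> int" where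
  "mobius le P = (THE m. is_mobius le P m)"

definition charpoly :: "('a \<Rightarrow> 'a \<Rightarrow> bool) \<Rightarrow> 'a set \<Rightarrow> int poly" where
  "charpoly le P = (\<Sum>x\<in>P. monom (mobius le P (bot le P) x) (rank le P - rk le P x))"

definition atoms :: "('a \<Rightarrow> 'a \<Rightarrow> bool) \<Rightarrow> 'a set \<Rightarrow> 'a set" where
  "atoms le P = {x\<in>P. rk le P x = 1}"

definition upper_bounds :: "('a \<Rightarrow> 'a \<Rightarrow> bool) \<Rightarrow> 'a set \<Rightarrow> 'a set \<Rightarrow> 'a set" where
  "upper_bounds le P T = {u\<in>P. \<forall>t\<in>T. le t u}"

definition joins :: "('a \<Rightarrow> 'a \<Rightarrow> bool) \<Rightarrow> 'a set \<Rightarrow> 'a set \<Rightarrow> 'a set" where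
  "joins le P T = minimal_elems le (upper_bounds le P T)"

definition is_lub :: "('a \<Rightarrow> 'a \<Rightarrow> bool) \<Rightarrow> 'a set \<Rightarrow> 'a set \<Rightarrow> 'a \<Rightarrow> bool" where
  "is_lub le L T s \<longleftrightarrow> s \<in> L \<and> (\<forall>t\<in>T. le t s) \<and> (\<forall>u\<in>L. (\<forall>t\<in>T. le t u) \<longrightarrow> le s u)"

definition is_glb :: "('a \<Rightarrow> 'a \<Rightarrow> bool) \<Rightarrow> 'a set \<Rightarrow> 'a set \<Rightarrow> 'a \<Rightarrow> bool" where
  "is_glb le L T s \<longleftrightarrow> s \<in> L \<and> (\<forall>t\<in>T. le s t) \<and> (\<forall>u\<in>L. (\<forall>t\<in>T. le u t) \<longrightarrow> le u s)"

definition join :: "('a \<Rightarrow> 'a \<Rightarrow> bool) \<Rightarrow> 'a set \<Rightarrow> 'a \<Rightarrow> 'a \<Rightarrow> 'a" where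
  "join le L x y = (THE s. is_lub le L {x, y} s)"

definition meet :: "('a \<Rightarrow> 'a \<Rightarrow> bool) \<Rightarrow> 'a set \<Rightarrow> 'a \<Rightarrow> 'a \<Rightarrow> 'a" where
  "meet le L x y = (THE s. is_glb le L {x, y} s)"

definition is_lattice :: "('a \<Rightarrow> 'a \<Rightarrow> bool) \<Rightarrow> 'a set \<Rightarrow> bool" where
  "is_lattice le L \<longleftrightarrow> is_poset le L \<and>
     (\<forall>x\<in>L. \<forall>y\<in>L. (\<exists>s. is_lub le L {x, y} s) \<and> (\<exists>s. is_glb le L {x, y} s))"

definition geometric_lattice :: "('a \<Rightarrow> 'a \<Rightarrow> bool) \<Rightarrow> 'a set \<Rightarrow> bool" where
  "geometric_lattice le L \<longleftrightarrow> is_lattice le L \<and>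
     (\<forall>x\<in>L. \<forall>y\<in>L. covers le L x y \<longleftrightarrow>
        (\<exists>a\<in>atoms le L. \<not> le a x \<and> y = join le L x a))"

definition down :: "('a \<Rightarrow> 'a \<Rightarrow> bool) \<Rightarrow> 'a set \<Rightarrow> 'a \<Rightarrow> 'a set" where
  "down le P x = {y\<in>P. le y x}"

definition up :: "('a \<Rightarrow> 'a \<Rightarrow> bool) \<Rightarrow> 'a set \<Rightarrow> 'a \<Rightarrow> 'a set" where
  "up le P x = {y\<in>P. le x y}"

definition locally_geometric :: "('a \<Rightarrow> 'a \<Rightarrow> bool) \<Rightarrow> 'a set \<Rightarrow> bool" where
  "locally_geometric le P \<longleftrightarrow> is_poset le P \<and> (\<forall>x\<in>P. geometric_lattice le (down le P x))"

definition modular_elem :: "('a \<Rightarrow> 'a \<Rightarrow> bool) \<Rightarrow> 'a set \<Rightarrow> 'a \<Rightarrow> bool" where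
  "modular_elem le L x \<longleftrightarrow> x \<in> L \<and>
     (\<forall>y\<in>L. \<forall>z\<in>L. le z x \<longrightarrow> meet le L x (join le L y z) = join le L (meet le L x y) z)"

definition subposet_gen :: "('a \<Rightarrow> 'a \<Rightarrow> bool) \<Rightarrow> 'a set \<Rightarrow> 'a set \<Rightarrow> 'a set" where
  "subposet_gen le P B = insert (bot le P) (\<Union>{joins le P T | T. T \<subseteq> B \<and> T \<noteq> {}})"

definition order_ideal :: "('a \<Rightarrow> 'a \<Rightarrow> bool) \<Rightarrow> 'a set \<Rightarrow> 'a set \<Rightarrow> bool" where
  "order_ideal le P Q \<longleftrightarrow> Q \<subseteq> P \<and> (\<forall>x\<in>Q. \<forall>y\<in>P. le y x \<longrightarrow> y \<in> Q)"

definition pure :: "('a \<Rightarrow> 'a \<Rightarrow> bool) \<Rightarrow> 'a set \<Rightarrow> bool" where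
  "pure le Q \<longleftrightarrow> (\<forall>x\<in>maximal_elems le Q. \<forall>y\<in>maximal_elems le Q. rk le Q x = rk le Q y)"

definition join_closed :: "('a \<Rightarrow> 'a \<Rightarrow> bool) \<Rightarrow> 'a set \<Rightarrow> 'a set \<Rightarrow> bool" where
  "join_closed le P Q \<longleftrightarrow> (\<forall>T. T \<subseteq> Q \<longrightarrow> joins le P T \<subseteq> Q)"

definition M_ideal :: "('a \<Rightarrow> 'a \<Rightarrow> bool) \<Rightarrow> 'a set \<Rightarrow> 'a set \<Rightarrow> bool" where
  "M_ideal le P Q \<longleftrightarrow> order_ideal le P Q \<and> pure le Q \<and> join_closed le P Q \<and>
     (\<forall>y\<in>Q. \<forall>a\<in>atoms le P - atoms le Q. card (joins le P {a, y}) \<ge> 1) \<and>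
     (\<forall>x\<in>maximal_elems le P. \<exists>y\<in>maximal_elems le Q. modular_elem le (down le P x) y)"

definition TM_ideal :: "('a \<Rightarrow> 'a \<Rightarrow> bool) \<Rightarrow> 'a set \<Rightarrow> 'a set \<Rightarrow> bool" where
  "TM_ideal le P Q \<longleftrightarrow> M_ideal le P Q \<and>
     (\<forall>y\<in>Q. \<forall>a\<in>atoms le P - atoms le Q. card (joins le P {a, y}) = 1)"

definition strictly_supersolvable :: "('a \<Rightarrow> 'a \<Rightarrow> bool) \<Rightarrow> 'a set \<Rightarrow> bool" where
  "strictly_supersolvable le P \<longleftrightarrow>
     (\<exists>Q :: nat \<Rightarrow> 'a set.
        Q 0 = {bot le P} \<and> Q (rank le P) = P \<and>
        (\<forall>i < rank le P. Q i \<subset> Q (Suc i) \<and> TM_ideal le (Q (Suc i)) (Q i)) \<and>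
        (\<forall>i \<le> rank le P. rank le (Q i) = i))"

text \<open>All posets arising are subsets of the carrier with the same order, so the class
  can be generated within a fixed type and order.\<close>
inductive inductive_poset :: "('a \<Rightarrow> 'a \<Rightarrow> bool) \<Rightarrow> 'a set \<Rightarrow> bool" for le where
  base: "le z z \<Longrightarrow> inductive_poset le {z}"
| step: "\<lbrakk> locally_geometric le P; a \<in> atoms le P;
          inductive_poset le (up le P a);
          inductive_poset le (subposet_gen le P (atoms le P - {a}));
          charpoly le (up le P a) dvd charpoly le (subposet_gen le P (atoms le P - {a})) \<rbrakk>
        \<Longrightarrow> inductive_poset le P"

end

theory Submission
  imports Defs
begin


inductive cch :: "('a \<Rightarrow> 'a \<Rightarrow> bool) \<Rightarrow> 'a set \<Rightarrow> 'a \<Rightarrow> 'a \<Rightarrow> nat \<Rightarrow> bool"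
  for le P where
  cch0: "cch le P u u 0"
| cchS: "cch le P u y n \<Longrightarrow> covers le P y x \<Longrightarrow> cch le P u x (Suc n)"

lemma cch_trans: "cch le P y x m \<Longrightarrow> cch le P u y n \<Longrightarrow> cch le P u x (n + m)"
  by (induction rule: cch.induct) (auto intro: cch.intros)

lemma cch_Suc_first: "cch le P y x m \<Longrightarrow> covers le P u y \<Longrightarrow> cch le P u x (Suc m)"
proof -
  assume a: "cch le P y x m" "covers le P u y"
  have "cch le P u y 1" using cchS[OF cch0 a(2)] by simp
  from cch_trans[OF a(1) this] show ?thesis by simp
qed

lemma cch0_eq: "cch le P u x 0 \<Longrightarrow> x = u"
  by (cases rule: cch.cases) auto

locale pos =
  fixes le :: "'a \<Rightarrow> 'a \<Rightarrow> bool" and P :: "'a set"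
  assumes ip: "is_poset le P"
begin

lemma fin: "finite P" using ip unfolding is_poset_def by blast
lemma lrefl: "x \<in> P \<Longrightarrow> le x x" using ip unfolding is_poset_def by blast
lemma lantisym: "x \<in> P \<Longrightarrow> y \<in> P \<Longrightarrow> le x y \<Longrightarrow> le y x \<Longrightarrow> x = y"
  using ip unfolding is_poset_def by blast
lemma ltrans: "x \<in> P \<Longrightarrow> y \<in> P \<Longrightarrow> z \<in> P \<Longrightarrow> le x y \<Longrightarrow> le y z \<Longrightarrow> le x z"
  using ip unfolding is_poset_def by blast

lemma min_exists:
  assumes "S \<subseteq> P" "S \<noteq> {}"
  shows "\<exists>m\<in>S. \<forall>y\<in>S. le y m \<longrightarrow> y = m"
proof -
  define f where "f m = card {z\<in>S. le z m}" for m
  have finS: "finite S" using assms(1) fin finite_subset by blast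
  obtain m where m: "m \<in> S" "\<forall>y\<in>S. f m \<le> f y"
    using arg_min_least[OF finS assms(2), where f=f] arg_min_if_finite(1)[OF finS assms(2), where f=f] by blast
  show ?thesis
  proof (intro bexI[OF _ m(1)] ballI impI)
    fix y assume y: "y \<in> S" "le y m"
    show "y = m"
    proof (rule ccontr)
      assume ne: "y \<noteq> m"
      have sub: "{z\<in>S. le z y} \<subseteq> {z\<in>S. le z m}"
        using y m assms(1) ltrans by blast
      have "m \<notin> {z\<in>S. le z y}" using lantisym y m assms(1) ne by blast
      moreover have "m \<in> {z\<in>S. le z m}" using m lrefl assms(1) by blast
      ultimately have "{z\<in>S. le z y} \<subset> {z\<in>S. le z m}" using sub by blast
      hence "f y < f m" unfolding f_def by (rule psubset_card_mono[rotated]) (use finS in auto)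
      thus False using m(2) y(1) by force
    qed
  qed
qed

lemma max_exists:
  assumes "S \<subseteq> P" "S \<noteq> {}"
  shows "\<exists>m\<in>S. \<forall>y\<in>S. le m y \<longrightarrow> y = m"
proof -
  define f where "f m = card {z\<in>S. le m z}" for m
  have finS: "finite S" using assms(1) fin finite_subset by blast
  obtain m where m: "m \<in> S" "\<forall>y\<in>S. f m \<le> f y"
    using arg_min_least[OF finS assms(2), where f=f] arg_min_if_finite(1)[OF finS assms(2), where f=f] by blast
  show ?thesis
  proof (intro bexI[OF _ m(1)] ballI impI)
    fix y assume y: "y \<in> S" "le m y"
    show "y = m"
    proof (rule ccontr)
      assume ne: "y \<noteq> m"
      have sub: "{z\<in>S. le y z} \<subseteq> {z\<in>S. le m z}"
        using y m assms(1) ltrans by blast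
      have "m \<notin> {z\<in>S. le y z}" using lantisym y m assms(1) ne by blast
      moreover have "m \<in> {z\<in>S. le m z}" using m lrefl assms(1) by blast
      ultimately have "{z\<in>S. le y z} \<subset> {z\<in>S. le m z}" using sub by blast
      hence "f y < f m" unfolding f_def by (rule psubset_card_mono[rotated]) (use finS in auto)
      thus False using m(2) y(1) by force
    qed
  qed
qed

lemma min_below:
  assumes "S \<subseteq> P" "x \<in> S"
  shows "\<exists>m\<in>S. le m x \<and> (\<forall>y\<in>S. le y m \<longrightarrow> y = m)"
proof -
  have "{y\<in>S. le y x} \<noteq> {}" using assms lrefl by blast
  from min_exists[OF _ this] assms obtain m where m: "m \<in> S" "le m x"
    "\<forall>y\<in>{y\<in>S. le y x}. le y m \<longrightarrow> y = m" by auto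
  show ?thesis using m ltrans assms by (intro bexI[of _ m]) blast+
qed

lemma max_above:
  assumes "S \<subseteq> P" "x \<in> S"
  shows "\<exists>m\<in>S. le x m \<and> (\<forall>y\<in>S. le m y \<longrightarrow> y = m)"
proof -
  have "{y\<in>S. le x y} \<noteq> {}" using assms lrefl by blast
  from max_exists[OF _ this] assms obtain m where m: "m \<in> S" "le x m"
    "\<forall>y\<in>{y\<in>S. le x y}. le m y \<longrightarrow> y = m" by auto
  show ?thesis using m ltrans assms by (intro bexI[of _ m]) blast+
qed

definition bt where "bt = bot le P"

lemma bot_props: "bt \<in> P \<and> (\<forall>x\<in>P. le bt x)"
proof -
  have ex1: "\<exists>!z. z \<in> minimal_elems le P" using ip unfolding is_poset_def by blast
  have bm: "bt \<in> minimal_elems le P" unfolding bt_def bot_def using theI'[OF ex1] .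
  have "le bt x" if x: "x \<in> P" for x
  proof -
    obtain m where m: "m \<in> P" "le m x" "\<forall>y\<in>P. le y m \<longrightarrow> y = m" using min_below[OF _ x] by blast
    have "m \<in> minimal_elems le P" unfolding minimal_elems_def lt_def using m by blast
    hence "m = bt" using ex1 bm by blast
    thus ?thesis using m by simp
  qed
  thus ?thesis using bm unfolding minimal_elems_def by blast
qed

lemma bot_in: "bt \<in> P" and bot_le: "x \<in> P \<Longrightarrow> le bt x"
  using bot_props by auto

lemma bot_unique: "x \<in> P \<Longrightarrow> le x bt \<Longrightarrow> x = bt"
  using lantisym bot_in bot_le by blast

lemma cch_le: "cch le P u x n \<Longrightarrow> u \<in> P \<Longrightarrow> le u x \<and> x \<in> P"
  by (induction rule: cch.induct) (auto simp: covers_def lt_def intro: lrefl ltrans)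

lemma cover_exists:
  assumes "u \<in> P" "x \<in> P" "le u x" "u \<noteq> x"
  shows "\<exists>v. covers le P u v \<and> le v x"
proof -
  have "{z\<in>P. lt le u z \<and> le z x} \<noteq> {}" using assms lrefl unfolding lt_def by blast
  from min_exists[OF _ this] obtain m where m: "m \<in> P" "lt le u m" "le m x"
     "\<forall>y\<in>{z\<in>P. lt le u z \<and> le z x}. le y m \<longrightarrow> y = m" by blast
  have "covers le P u m" unfolding covers_def
  proof (intro conjI assms m notI)
    assume "\<exists>z\<in>P. lt le u z \<and> lt le z m"
    then obtain z where z: "z \<in> P" "lt le u z" "lt le z m" by blast
    have "le z x" using ltrans[OF z(1) m(1) assms(2)] z m unfolding lt_def by blast
    thus False using m(4) z unfolding lt_def by blast
  qed
  thus ?thesis using m by blast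
qed

lemma cover_below_exists:
  assumes "u \<in> P" "x \<in> P" "le u x" "u \<noteq> x"
  shows "\<exists>v. covers le P v x \<and> le u v"
proof -
  have "{z\<in>P. le u z \<and> lt le z x} \<noteq> {}" using assms lrefl unfolding lt_def by blast
  from max_exists[OF _ this] obtain m where m: "m \<in> P" "lt le m x" "le u m"
     "\<forall>y\<in>{z\<in>P. le u z \<and> lt le z x}. le m y \<longrightarrow> y = m" by blast
  have "covers le P m x" unfolding covers_def
  proof (intro conjI assms m notI)
    assume "\<exists>z\<in>P. lt le m z \<and> lt le z x"
    then obtain z where z: "z \<in> P" "lt le m z" "lt le z x" by blast
    have "le u z" using ltrans[OF assms(1) m(1) z(1)] z m unfolding lt_def by blast
    thus False using m(4) z unfolding lt_def by blast
  qed
  thus ?thesis using m by blast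
qed

lemma cch_exists:
  assumes "u \<in> P" "x \<in> P" "le u x"
  shows "\<exists>n. cch le P u x n"
  using assms(2,3)
proof (induction "card {z\<in>P. le u z \<and> lt le z x}" arbitrary: x rule: less_induct)
  case less
  show ?case
  proof (cases "u = x")
    case True thus ?thesis using cch.cch0[of le P u] by (intro exI[of _ 0]) simp
  next
    case False
    obtain v where v: "covers le P v x" "le u v" using cover_below_exists[OF assms(1) less.prems(1,2) False] by blast
    have vP: "v \<in> P" using v covers_def by metis
    have sub: "{z\<in>P. le u z \<and> lt le z v} \<subset> {z\<in>P. le u z \<and> lt le z x}"
    proof
      show "{z\<in>P. le u z \<and> lt le z v} \<subseteq> {z\<in>P. le u z \<and> lt le z x}"
        using v vP less.prems lantisym ltrans unfolding covers_def lt_def by blast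
      show "{z\<in>P. le u z \<and> lt le z v} \<noteq> {z\<in>P. le u z \<and> lt le z x}"
        using v vP unfolding covers_def lt_def by blast
    qed
    have "card {z\<in>P. le u z \<and> lt le z v} < card {z\<in>P. le u z \<and> lt le z x}"
      using psubset_card_mono[OF _ sub] fin by auto
    from less.hyps[OF this vP v(2)] obtain n where n: "cch le P u v n" by blast
    have "cch le P u x (Suc n)" by (rule cch.cchS[OF n v(1)])
    thus ?thesis by (rule exI)
  qed
qed

lemma cch_list:
  assumes "cch le P u x n" "u \<in> P"
  shows "\<exists>cs. cs \<noteq> [] \<and> hd cs = u \<and> last cs = x \<and> set cs \<subseteq> P \<and>
     (\<forall>i. Suc i < length cs \<longrightarrow> covers le P (cs ! i) (cs ! Suc i)) \<and> length cs = Suc n"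
  using assms
proof (induction rule: cch.induct)
  case (cch0 u)
  thus ?case by (intro exI[of _ "[u]"]) auto
next
  case (cchS u y n x)
  then obtain cs where cs: "cs \<noteq> []" "hd cs = u" "last cs = y" "set cs \<subseteq> P"
     "\<forall>i. Suc i < length cs \<longrightarrow> covers le P (cs ! i) (cs ! Suc i)" "length cs = Suc n" by blast
  have xP: "x \<in> P" using cchS(2) covers_def by metis
  show ?case
  proof (intro exI[of _ "cs @ [x]"] conjI allI impI)
    fix i assume i: "Suc i < length (cs @ [x])"
    show "covers le P ((cs @ [x]) ! i) ((cs @ [x]) ! Suc i)"
    proof (cases "Suc i < length cs")
      case True thus ?thesis using cs(5) i by (simp add: nth_append)
    next
      case False
      hence "i = length cs - 1" using i by simp
      moreover have "cs ! (length cs - 1) = y" using cs(1,3) by (simp add: last_conv_nth)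
      ultimately show ?thesis using cchS(2) cs(1) False by (simp add: nth_append)
    qed
  qed (use cs xP in auto)
qed

lemma list_cch:
  "cs \<noteq> [] \<Longrightarrow> (\<forall>i. Suc i < length cs \<longrightarrow> covers le P (cs ! i) (cs ! Suc i)) \<Longrightarrow>
     cch le P (hd cs) (last cs) (length cs - 1)"
proof (induction cs rule: rev_induct)
  case Nil thus ?case by simp
next
  case (snoc x xs)
  show ?case
  proof (cases "xs = []")
    case True thus ?thesis by (simp add: cch0)
  next
    case False
    have "\<forall>i. Suc i < length xs \<longrightarrow> covers le P (xs ! i) (xs ! Suc i)"
    proof (intro allI impI)
      fix i assume i: "Suc i < length xs"
      have "covers le P ((xs @ [x]) ! i) ((xs @ [x]) ! Suc i)" using snoc.prems(2) i by simp
      thus "covers le P (xs ! i) (xs ! Suc i)" using i by (simp add: nth_append)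
    qed
    from snoc.IH[OF False this] have c: "cch le P (hd xs) (last xs) (length xs - 1)" .
    have "Suc (length xs - 1) < length (xs@[x])" using False by simp
    from snoc.prems(2)[rule_format, OF this] have cv: "covers le P ((xs @ [x]) ! (length xs - 1)) ((xs @ [x]) ! Suc (length xs - 1))" .
    have e1: "(xs @ [x]) ! (length xs - 1) = last xs" using False by (simp add: nth_append last_conv_nth)
    have e2: "(xs @ [x]) ! Suc (length xs - 1) = x" using False by (simp add: nth_append)
    have "covers le P (last xs) x" using cv e1 e2 by simp
    from cchS[OF c this] show ?thesis using False by simp
  qed
qed

lemma rk_cch: assumes "cch le P bt x n" shows "rk le P x = n"
proof -
  obtain cs where cs: "satchain le P cs x" "length cs = Suc n"
    using cch_list[OF assms bot_in] unfolding satchain_def bt_def by blast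
  have xP: "x \<in> P" using cch_le[OF assms bot_in] by blast
  have ex: "\<exists>m cs. satchain le P cs x \<and> length cs = Suc m" using cs by blast
  obtain ds where ds: "satchain le P ds x" "length ds = Suc (rk le P x)"
    using someI_ex[OF ex] unfolding rk_def by blast
  have "length cs = length ds" using ip xP cs ds unfolding is_poset_def by blast
  thus ?thesis using cs ds by simp
qed

lemma rk_ex: assumes "x \<in> P" shows "cch le P bt x (rk le P x)"
proof -
  obtain n where n: "cch le P bt x n" using cch_exists[OF bot_in assms bot_le[OF assms]] by blast
  show ?thesis using n rk_cch[OF n] by simp
qed

lemma cch_rk: assumes "cch le P u x n" "u \<in> P" shows "rk le P x = rk le P u + n"
proof -
  have "cch le P bt x (rk le P u + n)" using cch_trans[OF assms(1) rk_ex[OF assms(2)]] .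
  thus ?thesis by (rule rk_cch)
qed

lemma rk_lt: assumes "u \<in> P" "x \<in> P" "le u x" "u \<noteq> x" shows "rk le P u < rk le P x"
proof -
  obtain n where n: "cch le P u x n" using cch_exists assms by blast
  have "n \<noteq> 0"
  proof
    assume "n = 0" then have "cch le P u x 0" using n by simp
    then have "x = u" by (rule cch0_eq)
    thus False using assms(4) by simp
  qed
  thus ?thesis using cch_rk[OF n assms(1)] by simp
qed

lemma rk_mono: "u \<in> P \<Longrightarrow> x \<in> P \<Longrightarrow> le u x \<Longrightarrow> rk le P u \<le> rk le P x"
  by (metis rk_lt le_refl less_imp_le)

lemma eq_by_rk: "u \<in> P \<Longrightarrow> x \<in> P \<Longrightarrow> le u x \<Longrightarrow> rk le P u = rk le P x \<Longrightarrow> u = x"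
  using rk_lt by fastforce

lemma cover_rk: "covers le P u v \<Longrightarrow> rk le P v = Suc (rk le P u)"
  using cch_rk[OF cchS[OF cch0]] unfolding covers_def by fastforce

lemma rk_bot: "rk le P bt = 0" using rk_cch[OF cch0] .

lemma rk0: "x \<in> P \<Longrightarrow> rk le P x = 0 \<Longrightarrow> x = bt"
  using rk_lt[OF bot_in _ bot_le] by fastforce

lemma atom_le: "b \<in> atoms le P \<Longrightarrow> x \<in> P \<Longrightarrow> le x b \<Longrightarrow> x = bt \<or> x = b"
  unfolding atoms_def using rk_lt rk0 by (cases "x = b") fastforce+

lemma atom_ne_bot: "b \<in> atoms le P \<Longrightarrow> b \<noteq> bt"
  unfolding atoms_def using rk_bot by auto

lemma rk_le_rank: "x \<in> P \<Longrightarrow> rk le P x \<le> rank le P"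
  unfolding rank_def using fin by simp

lemma rank_attained: "\<exists>x\<in>P. rk le P x = rank le P"
  unfolding rank_def using fin bot_in by (metis (mono_tags, lifting) Max_in empty_iff finite_imageI image_iff)

end


context pos begin

lemma cch_restrict:
  assumes "cch le P u x n" "x \<in> D" "D \<subseteq> P" "\<forall>x\<in>D. \<forall>y\<in>P. le y x \<longrightarrow> y \<in> D"
  shows "cch le D u x n"
  using assms(1,2)
proof (induction rule: cch.induct)
  case (cch0 u) show ?case by (rule cch.cch0)
next
  case (cchS u y n x)
  have yD: "y \<in> D" using cchS.hyps(2) cchS.prems assms(4) unfolding covers_def lt_def by blast
  have "covers le D y x" using cchS.hyps(2) yD cchS.prems assms(3) unfolding covers_def by blast
  from cch.cchS[OF cchS.IH[OF yD] this] show ?case .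
qed

lemma ideal_props:
  assumes D: "D \<subseteq> P" "\<forall>x\<in>D. \<forall>y\<in>P. le y x \<longrightarrow> y \<in> D" "D \<noteq> {}"
  shows "bt \<in> D" and "bot le D = bt"
    and "\<And>u v. v \<in> D \<Longrightarrow> covers le D u v \<longleftrightarrow> covers le P u v"
    and "pos le D"
    and "\<And>x. x \<in> D \<Longrightarrow> rk le D x = rk le P x"
proof -
  show btD: "bt \<in> D" using D bot_le bot_in by blast
  show cov: "\<And>u v. v \<in> D \<Longrightarrow> covers le D u v \<longleftrightarrow> covers le P u v"
  proof -
    fix u v assume v: "v \<in> D"
    show "covers le D u v \<longleftrightarrow> covers le P u v"
    proof
      assume "covers le D u v" thus "covers le P u v"
        using D(1,2) v unfolding covers_def lt_def by (meson subsetD)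
    next
      assume c: "covers le P u v"
      hence "u \<in> D" using D(2) v unfolding covers_def lt_def by blast
      thus "covers le D u v" using c v D(1) unfolding covers_def by blast
    qed
  qed
  have minD: "minimal_elems le D = {bt}"
  proof -
    have "x = bt" if "x \<in> minimal_elems le D" for x
      using that btD bot_le D unfolding minimal_elems_def lt_def by blast
    moreover have "bt \<in> minimal_elems le D"
      using btD bot_unique D unfolding minimal_elems_def lt_def by blast
    ultimately show ?thesis by blast
  qed
  show botD: "bot le D = bt" unfolding bot_def minD by simp
  have sat: "satchain le P cs x" if "satchain le D cs x" for cs x
  proof -
    have "covers le P (cs ! i) (cs ! Suc i)" if i: "Suc i < length cs" for i
    proof -
      have "cs ! Suc i \<in> D" using \<open>satchain le D cs x\<close> i unfolding satchain_def
        by (meson nth_mem subsetD)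
      thus ?thesis using cov \<open>satchain le D cs x\<close> i unfolding satchain_def by blast
    qed
    thus ?thesis using that D(1) botD unfolding satchain_def bt_def by auto
  qed
  show pD: "pos le D"
  proof
    show "is_poset le D" unfolding is_poset_def
    proof (intro conjI)
      show "finite D" using fin D finite_subset by blast
      show "\<exists>!z. z \<in> minimal_elems le D" using minD by simp
      show "\<forall>x\<in>D. \<forall>cs ds. satchain le D cs x \<and> satchain le D ds x \<longrightarrow> length cs = length ds"
      proof (intro ballI allI impI)
        fix x cs ds assume x: "x \<in> D" and c: "satchain le D cs x \<and> satchain le D ds x"
        have "satchain le P cs x" "satchain le P ds x" using sat c by auto
        moreover have "x \<in> P" using x D(1) by blast
        moreover have "\<forall>x\<in>P. \<forall>cs ds. satchain le P cs x \<and> satchain le P ds x \<longrightarrow> length cs = length ds"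
          using ip unfolding is_poset_def by blast
        ultimately show "length cs = length ds" by blast
      qed
      show "\<forall>x\<in>D. le x x" using D(1) lrefl by blast
      show "\<forall>x\<in>D. \<forall>y\<in>D. le x y \<and> le y x \<longrightarrow> x = y" using D(1) lantisym by blast
      show "\<forall>x\<in>D. \<forall>y\<in>D. \<forall>z\<in>D. le x y \<and> le y z \<longrightarrow> le x z"
      proof (intro ballI impI)
        fix x y z assume "x\<in>D" "y\<in>D" "z\<in>D" "le x y \<and> le y z"
        thus "le x z" using ltrans[of x y z] D(1) by blast
      qed
    qed
  qed
  show "\<And>x. x \<in> D \<Longrightarrow> rk le D x = rk le P x"
  proof -
    fix x assume x: "x \<in> D"
    interpret D: pos le D by (rule pD)
    have "cch le D bt x (rk le P x)" using cch_restrict[OF rk_ex x D(1,2)] x D by blast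
    hence "cch le D D.bt x (rk le P x)" using botD unfolding D.bt_def by simp
    thus "rk le D x = rk le P x" by (rule D.rk_cch)
  qed
qed

lemma down_ideal:
  assumes "x \<in> P"
  shows "down le P x \<subseteq> P" "\<forall>z\<in>down le P x. \<forall>y\<in>P. le y z \<longrightarrow> y \<in> down le P x"
    "down le P x \<noteq> {}" "x \<in> down le P x"
proof -
  show "down le P x \<subseteq> P" unfolding down_def by blast
  show "\<forall>z\<in>down le P x. \<forall>y\<in>P. le y z \<longrightarrow> y \<in> down le P x"
  proof (intro ballI impI)
    fix z y assume "z \<in> down le P x" "y \<in> P" "le y z"
    thus "y \<in> down le P x" using ltrans[of y z x] assms unfolding down_def by blast
  qed
  show "x \<in> down le P x" using assms lrefl unfolding down_def by blast
  thus "down le P x \<noteq> {}" by blast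
qed

lemma down_props:
  assumes "x \<in> P"
  shows "bot le (down le P x) = bt"
    and "\<And>u v. v \<in> down le P x \<Longrightarrow> covers le (down le P x) u v \<longleftrightarrow> covers le P u v"
    and "pos le (down le P x)"
    and "\<And>y. y \<in> down le P x \<Longrightarrow> rk le (down le P x) y = rk le P y"
    and "atoms le (down le P x) = {b\<in>atoms le P. le b x}"
proof -
  note I = ideal_props[OF down_ideal(1-3)[OF assms]]
  show "bot le (down le P x) = bt" "\<And>u v. v \<in> down le P x \<Longrightarrow> covers le (down le P x) u v \<longleftrightarrow> covers le P u v"
    "pos le (down le P x)" "\<And>y. y \<in> down le P x \<Longrightarrow> rk le (down le P x) y = rk le P y"
    using I by auto
  show "atoms le (down le P x) = {b\<in>atoms le P. le b x}"
    using I(5) unfolding atoms_def down_def by auto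
qed

lemma ub_above_join:
  assumes "u \<in> upper_bounds le P T"
  shows "\<exists>j\<in>joins le P T. le j u"
proof -
  have "upper_bounds le P T \<subseteq> P" unfolding upper_bounds_def by blast
  from min_below[OF this assms] obtain m where m: "m \<in> upper_bounds le P T" "le m u"
    "\<forall>y\<in>upper_bounds le P T. le y m \<longrightarrow> y = m" by blast
  have "m \<in> joins le P T" unfolding joins_def minimal_elems_def lt_def using m by blast
  thus ?thesis using m by blast
qed

lemma joins_sub: "joins le P T \<subseteq> upper_bounds le P T" "joins le P T \<subseteq> P"
  unfolding joins_def minimal_elems_def upper_bounds_def by auto

lemma joins_empty: "joins le P {} = {bt}"
proof -
  have "upper_bounds le P {} = P" unfolding upper_bounds_def by auto
  moreover have "minimal_elems le P = {bt}"
    using bot_in bot_le bot_unique unfolding minimal_elems_def lt_def by blast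
  ultimately show ?thesis unfolding joins_def by simp
qed

lemma joins_mem_iff:
  "j \<in> joins le P T \<longleftrightarrow> j \<in> P \<and> (\<forall>t\<in>T. le t j) \<and> (\<forall>s\<in>P. (\<forall>t\<in>T. le t s) \<longrightarrow> le s j \<longrightarrow> s = j)"
  unfolding joins_def minimal_elems_def upper_bounds_def lt_def by blast

lemma joins_singleton_le:
  assumes "joins le P T = {j}" "u \<in> P" "\<forall>t\<in>T. le t u"
  shows "le j u"
proof -
  have "u \<in> upper_bounds le P T" using assms(2,3) unfolding upper_bounds_def by blast
  from ub_above_join[OF this] show ?thesis using assms(1) by auto
qed

lemma lub_unique:
  assumes "is_lub le L T s" "is_lub le L T s'" "L \<subseteq> P" shows "s = s'"
proof -
  have "s \<in> L" "s' \<in> L" "le s s'" "le s' s" using assms(1,2) unfolding is_lub_def by blast+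
  thus ?thesis using lantisym assms(3) by blast
qed

lemma glb_unique:
  assumes "is_glb le L T s" "is_glb le L T s'" "L \<subseteq> P" shows "s = s'"
proof -
  have "s \<in> L" "s' \<in> L" "le s s'" "le s' s" using assms(1,2) unfolding is_glb_def by blast+
  thus ?thesis using lantisym assms(3) by blast
qed

lemma join_eqI: assumes "is_lub le L {u, v} s" "L \<subseteq> P" shows "join le L u v = s"
  unfolding join_def by (rule the_equality[where P="\<lambda>s. is_lub le L {u, v} s", OF assms(1)]) (rule lub_unique[OF _ assms(1,2)])

lemma meet_eqI: assumes "is_glb le L {u, v} s" "L \<subseteq> P" shows "meet le L u v = s"
  unfolding meet_def by (rule the_equality[where P="\<lambda>s. is_glb le L {u, v} s", OF assms(1)]) (rule glb_unique[OF _ assms(1,2)])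

end

locale lgeo = pos +
  assumes geo: "x \<in> P \<Longrightarrow> geometric_lattice le (down le P x)"
begin

lemma lat: "x \<in> P \<Longrightarrow> is_lattice le (down le P x)"
  using geo unfolding geometric_lattice_def by blast

lemma join_lub:
  assumes "x \<in> P" "u \<in> down le P x" "v \<in> down le P x"
  shows "is_lub le (down le P x) {u, v} (join le (down le P x) u v)"
proof -
  obtain s where s: "is_lub le (down le P x) {u, v} s" using lat[OF assms(1)] assms unfolding is_lattice_def by blast
  have "join le (down le P x) u v = s" using join_eqI[OF s down_ideal(1)[OF assms(1)]] .
  thus ?thesis using s by simp
qed

lemma meet_glb:
  assumes "x \<in> P" "u \<in> down le P x" "v \<in> down le P x"
  shows "is_glb le (down le P x) {u, v} (meet le (down le P x) u v)"
proof -
  obtain s where s: "is_glb le (down le P x) {u, v} s" using lat[OF assms(1)] assms unfolding is_lattice_def by blast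
  have "meet le (down le P x) u v = s" using meet_eqI[OF s down_ideal(1)[OF assms(1)]] .
  thus ?thesis using s by simp
qed

lemma join_in_joins:
  assumes "x \<in> P" "le u x" "le v x" "u \<in> P" "v \<in> P"
  shows "join le (down le P x) u v \<in> joins le P {u, v}"
proof -
  have uv: "u \<in> down le P x" "v \<in> down le P x" using assms unfolding down_def by auto
  note L = join_lub[OF assms(1) uv]
  show ?thesis unfolding joins_mem_iff
  proof (intro conjI ballI impI)
    show "join le (down le P x) u v \<in> P" using L unfolding is_lub_def down_def by blast
    show "\<And>t. t \<in> {u, v} \<Longrightarrow> le t (join le (down le P x) u v)" using L unfolding is_lub_def by blast
    fix s assume s: "s \<in> P" "\<forall>t\<in>{u, v}. le t s" "le s (join le (down le P x) u v)"
    have jx: "join le (down le P x) u v \<in> P" "le (join le (down le P x) u v) x"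
      using L unfolding is_lub_def down_def by blast+
    have "le s x" using ltrans[OF s(1) jx(1) assms(1) s(3) jx(2)] .
    hence "s \<in> down le P x" using s(1) unfolding down_def by blast
    hence "le (join le (down le P x) u v) s" using L s unfolding is_lub_def by blast
    thus "s = join le (down le P x) u v" using lantisym s L unfolding is_lub_def down_def by blast
  qed
qed

lemma joins_is_join:
  assumes "j \<in> joins le P {u, v}" "x \<in> P" "le j x" "u \<in> P" "v \<in> P"
  shows "join le (down le P x) u v = j"
proof -
  have j: "j \<in> P" "le u j" "le v j" using assms(1) unfolding joins_mem_iff by auto
  have "le u x" "le v x" using ltrans[OF assms(4) j(1) assms(2) j(2) assms(3)] ltrans[OF assms(5) j(1) assms(2) j(3) assms(3)] .
  hence uv: "u \<in> down le P x" "v \<in> down le P x" using assms unfolding down_def by blast+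
  note L = join_lub[OF assms(2) uv]
  have jd: "j \<in> down le P x" using j assms unfolding down_def by blast
  have sj: "le (join le (down le P x) u v) j" using L jd j unfolding is_lub_def by blast
  have "join le (down le P x) u v \<in> P" using L unfolding is_lub_def down_def by blast
  moreover have "\<forall>t\<in>{u, v}. le t (join le (down le P x) u v)" using L unfolding is_lub_def by blast
  ultimately show ?thesis using assms(1) sj unfolding joins_mem_iff by blast
qed

end


context lgeo begin

lemma atoms_generate:
  assumes "x \<in> P" "u \<in> P" "le u x" "\<forall>b\<in>atoms le P. le b x \<longrightarrow> le b u"
  shows "u = x"
proof (rule ccontr)
  assume ne: "u \<noteq> x"
  let ?D = "down le P x"
  interpret D: pos le ?D by (rule down_props(3)[OF assms(1)])
  have uD: "u \<in> ?D" and xD: "x \<in> ?D" using assms lrefl unfolding down_def by auto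
  obtain v where v: "covers le ?D u v" "le v x" using D.cover_exists[OF uD xD assms(3) ne] by blast
  have vD: "v \<in> ?D" using v(1) unfolding covers_def by blast
  have "\<exists>a\<in>atoms le ?D. \<not> le a u \<and> v = join le ?D u a"
    using geo[OF assms(1)] uD vD v(1) unfolding geometric_lattice_def by blast
  then obtain a where a: "a \<in> atoms le ?D" "\<not> le a u" by blast
  have "a \<in> atoms le P" "le a x" using a(1) down_props(5)[OF assms(1)] by auto
  thus False using assms(4) a(2) by blast
qed

lemma joins_atoms:
  assumes "T \<subseteq> P" "j \<in> joins le P T"
  shows "j \<in> joins le P {b\<in>atoms le P. \<exists>t\<in>T. le b t}"
proof -
  have j: "j \<in> P" "\<forall>t\<in>T. le t j" "\<forall>s\<in>P. (\<forall>t\<in>T. le t s) \<longrightarrow> le s j \<longrightarrow> s = j"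
    using assms(2) unfolding joins_mem_iff by auto
  have atP: "atoms le P \<subseteq> P" unfolding atoms_def by blast
  show ?thesis unfolding joins_mem_iff
  proof (intro conjI ballI impI)
    show "j \<in> P" by (rule j(1))
    fix b assume "b \<in> {b \<in> atoms le P. \<exists>t\<in>T. le b t}"
    then obtain t where t: "b \<in> atoms le P" "t \<in> T" "le b t" by blast
    show "le b j" using ltrans[of b t j] t j atP assms(1) by blast
  next
    fix s assume s: "s \<in> P" "\<forall>t\<in>{b \<in> atoms le P. \<exists>t\<in>T. le b t}. le t s" "le s j"
    have "le t s" if t: "t \<in> T" for t
    proof -
      let ?D = "down le P j"
      have tD: "t \<in> ?D" and sD: "s \<in> ?D" using t j s assms(1) unfolding down_def by auto
      note M = meet_glb[OF j(1) tD sD]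
      define m where "m = meet le ?D t s"
      have mD: "m \<in> ?D" and mt: "le m t" and ms: "le m s"
        using M unfolding m_def is_glb_def by auto
      have mP: "m \<in> P" using mD unfolding down_def by blast
      have "le b m" if b: "b \<in> atoms le P" "le b t" for b
      proof -
        have bP: "b \<in> P" using b atP by blast
        have bs: "le b s" using s(2) b t by blast
        have "le b j" using ltrans[of b t j] bP t j assms(1) b by blast
        hence "b \<in> ?D" using bP unfolding down_def by blast
        thus ?thesis using M b bs unfolding m_def is_glb_def by blast
      qed
      hence "m = t" using atoms_generate[OF _ mP mt] t assms(1) by blast
      thus ?thesis using ms by simp
    qed
    thus "s = j" using j(3) s(1,3) by blast
  qed
qed

lemma joins_self: "x \<in> P \<Longrightarrow> x \<in> joins le P {x}"
  unfolding joins_mem_iff using lantisym lrefl by blast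

lemma elem_join_atoms: "x \<in> P \<Longrightarrow> x \<in> joins le P {b\<in>atoms le P. le b x}"
  using joins_atoms[of "{x}" x] joins_self by auto

lemma cover_join:
  assumes b: "b \<in> atoms le P" and w: "w \<in> P" and nb: "\<not> le b w" and j: "j \<in> joins le P {b, w}"
  shows "covers le P w j" and "rk le P j = Suc (rk le P w)"
proof -
  have jP: "j \<in> P" and bj: "le b j" and wj: "le w j" using j unfolding joins_mem_iff by auto
  have bP: "b \<in> P" using b unfolding atoms_def by blast
  let ?D = "down le P j"
  have j': "j \<in> joins le P {w, b}" using j by (simp add: insert_commute)
  have jj: "join le ?D w b = j" using joins_is_join[OF j' jP lrefl[OF jP] w bP] .
  have wD: "w \<in> ?D" and jD: "j \<in> ?D" using w wj jP lrefl unfolding down_def by auto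
  have bD: "b \<in> atoms le ?D" using b bj down_props(5)[OF jP] by auto
  have "covers le ?D w j"
    using geo[OF jP] wD jD bD nb jj unfolding geometric_lattice_def by metis
  thus c: "covers le P w j" using down_props(2)[OF jP] jD by blast
  show "rk le P j = Suc (rk le P w)" using cover_rk[OF c] .
qed

lemma cover_is_join:
  assumes c: "covers le P u v"
  shows "\<exists>b\<in>atoms le P. le b v \<and> \<not> le b u \<and> v \<in> joins le P {b, u}"
proof -
  have uP: "u \<in> P" and vP: "v \<in> P" and uv: "le u v" using c unfolding covers_def lt_def by auto
  let ?D = "down le P v"
  have uD: "u \<in> ?D" and vD: "v \<in> ?D" using uP vP uv lrefl unfolding down_def by auto
  have "covers le ?D u v" using c down_props(2)[OF vP] vD by blast
  then obtain a where a: "a \<in> atoms le ?D" "\<not> le a u" "v = join le ?D u a"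
    using geo[OF vP] uD vD unfolding geometric_lattice_def by blast
  have aa: "a \<in> atoms le P" "le a v" using a(1) down_props(5)[OF vP] by auto
  have aP: "a \<in> P" using aa unfolding atoms_def by blast
  have "join le ?D u a \<in> joins le P {u, a}" using join_in_joins[OF vP uv aa(2) uP aP] .
  hence "v \<in> joins le P {a, u}" using a(3) by (simp add: insert_commute)
  thus ?thesis using aa a(2) by blast
qed

end


fun mobf :: "('a \<Rightarrow> 'a \<Rightarrow> bool) \<Rightarrow> 'a set \<Rightarrow> nat \<Rightarrow> 'a \<Rightarrow> 'a \<Rightarrow> int" where
  "mobf le P 0 x y = (if x \<in> P \<and> y \<in> P \<and> x = y then 1 else 0)"
| "mobf le P (Suc n) x y = (if x \<in> P \<and> y \<in> P then (if x = y then 1 else if lt le x y then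
      - (\<Sum>z\<in>{z\<in>P. le x z \<and> lt le z y}. mobf le P n x z) else 0) else 0)"

context pos begin

lemma mobf_out: "x \<notin> P \<or> y \<notin> P \<Longrightarrow> mobf le P n x y = 0"
  by (cases n) auto

lemma mobf_stable:
  assumes "y \<in> P" "rk le P y \<le> n"
  shows "mobf le P n x y = mobf le P (rk le P y) x y"
  using assms
proof (induction "rk le P y" arbitrary: y n rule: less_induct)
  case less
  show ?case
  proof (cases "x \<in> P \<and> x \<noteq> y \<and> lt le x y")
    case False
    thus ?thesis using less.prems by (cases n; cases "rk le P y") (auto simp: lt_def)
  next
    case True
    have "rk le P x < rk le P y" using rk_lt True less.prems unfolding lt_def by blast
    then obtain k where k: "rk le P y = Suc k" by (cases "rk le P y") auto
    then obtain n' where n': "n = Suc n'" "k \<le> n'" using less.prems by (cases n) auto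
    have "mobf le P n' x z = mobf le P k x z" if z: "z \<in> {z\<in>P. le x z \<and> lt le z y}" for z
    proof -
      have zl: "rk le P z < rk le P y" using rk_lt z less.prems unfolding lt_def by blast
      have zP: "z \<in> P" using z by blast
      have "rk le P z \<le> n'" "rk le P z \<le> k" using zl k n' by auto
      from less.hyps[OF zl zP this(1)] less.hyps[OF zl zP this(2)] show ?thesis by simp
    qed
    hence "(\<Sum>z\<in>{z\<in>P. le x z \<and> lt le z y}. mobf le P n' x z) = (\<Sum>z\<in>{z\<in>P. le x z \<and> lt le z y}. mobf le P k x z)"
      by (rule sum.cong[OF refl])
    thus ?thesis using k n' True less.prems by simp
  qed
qed

definition mob where "mob x y = mobf le P (rk le P y) x y"

lemma mob_is: "is_mobius le P mob"
  unfolding is_mobius_def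
proof (intro conjI allI impI ballI)
  fix x y assume "x \<notin> P \<or> y \<notin> P" thus "mob x y = 0" unfolding mob_def using mobf_out by blast
next
  fix x y assume x: "x \<in> P" and y: "y \<in> P"
  show "mob x y = (if x = y then 1 else if lt le x y then - (\<Sum>z\<in>{z\<in>P. le x z \<and> lt le z y}. mob x z) else 0)"
  proof (cases "x \<noteq> y \<and> lt le x y")
    case False thus ?thesis using x y unfolding mob_def by (cases "rk le P y") (auto simp: lt_def)
  next
    case True
    have "rk le P x < rk le P y" using rk_lt True x y unfolding lt_def by blast
    then obtain k where k: "rk le P y = Suc k" by (cases "rk le P y") auto
    have "mobf le P k x z = mob x z" if z: "z \<in> {z\<in>P. le x z \<and> lt le z y}" for z
    proof -
      have zl: "rk le P z < rk le P y" using rk_lt z y unfolding lt_def by blast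
      show ?thesis unfolding mob_def using mobf_stable[of z k x] z zl k by simp
    qed
    hence "(\<Sum>z\<in>{z\<in>P. le x z \<and> lt le z y}. mobf le P k x z) = (\<Sum>z\<in>{z\<in>P. le x z \<and> lt le z y}. mob x z)"
      by (rule sum.cong[OF refl])
    thus ?thesis using k True x y unfolding mob_def by simp
  qed
qed

lemma mobius_unique:
  assumes m1: "is_mobius le P m1" and m2: "is_mobius le P m2"
  shows "m1 = m2"
proof -
  have "m1 x y = m2 x y" if y: "y \<in> P" for x y
    using y
  proof (induction "rk le P y" arbitrary: y rule: less_induct)
    case less
    show ?case
    proof (cases "x \<in> P")
      case False thus ?thesis using m1 m2 unfolding is_mobius_def by metis
    next
      case True
      have "m1 x z = m2 x z" if z: "z \<in> {z\<in>P. le x z \<and> lt le z y}" for z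
        using less.hyps[of z] rk_lt z less.prems unfolding lt_def by blast
      hence "(\<Sum>z\<in>{z\<in>P. le x z \<and> lt le z y}. m1 x z) = (\<Sum>z\<in>{z\<in>P. le x z \<and> lt le z y}. m2 x z)"
        by (rule sum.cong[OF refl])
      moreover have "m1 x y = (if x = y then 1 else if lt le x y then - (\<Sum>z\<in>{z\<in>P. le x z \<and> lt le z y}. m1 x z) else 0)"
        using m1 True less.prems unfolding is_mobius_def by blast
      moreover have "m2 x y = (if x = y then 1 else if lt le x y then - (\<Sum>z\<in>{z\<in>P. le x z \<and> lt le z y}. m2 x z) else 0)"
        using m2 True less.prems unfolding is_mobius_def by blast
      ultimately show ?thesis by simp
    qed
  qed
  moreover have "m1 x y = m2 x y" if y: "y \<notin> P" for x y
    using m1 m2 y unfolding is_mobius_def by metis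
  ultimately show ?thesis by (intro ext) blast
qed

lemma mobius_is: "is_mobius le P (mobius le P)"
proof -
  have "\<exists>!m. is_mobius le P m" using mob_is mobius_unique by blast
  thus ?thesis unfolding mobius_def by (rule theI')
qed

lemma mobius_eq: "mobius le P = mob"
  using mobius_unique[OF mobius_is mob_is] .

lemma mu_bot: "mobius le P bt bt = 1"
  using mobius_is bot_in unfolding is_mobius_def by simp

lemma mu_rec:
  assumes "y \<in> P" "y \<noteq> bt"
  shows "mobius le P bt y = - (\<Sum>z\<in>{z\<in>P. lt le z y}. mobius le P bt z)"
proof -
  have "lt le bt y" using assms bot_le unfolding lt_def by blast
  moreover have "{z\<in>P. le bt z \<and> lt le z y} = {z\<in>P. lt le z y}" using bot_le by blast
  ultimately show ?thesis using mobius_is assms bot_in unfolding is_mobius_def by auto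
qed

lemma mu_sum:
  assumes "y \<in> P"
  shows "(\<Sum>z\<in>{z\<in>P. le z y}. mobius le P bt z) = (if y = bt then 1 else 0)"
proof -
  have fin': "finite {z\<in>P. lt le z y}" using fin by simp
  have e: "{z\<in>P. le z y} = insert y {z\<in>P. lt le z y}" using assms lrefl unfolding lt_def by blast
  have "(\<Sum>z\<in>{z\<in>P. le z y}. mobius le P bt z) = mobius le P bt y + (\<Sum>z\<in>{z\<in>P. lt le z y}. mobius le P bt z)"
  proof -
    have yn: "y \<notin> {z\<in>P. lt le z y}" unfolding lt_def by simp
    show ?thesis unfolding e by (rule sum.insert[OF fin' yn])
  qed
  moreover have "{z\<in>P. lt le z y} = {}" if "y = bt" using that bot_unique unfolding lt_def by blast
  ultimately show ?thesis using mu_rec[OF assms] mu_bot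
  proof (cases "y = bt")
    case True
    have E: "{z\<in>P. lt le z y} = {}" using True bot_unique unfolding lt_def by blast
    have "{z\<in>P. le z y} = {y}" unfolding e E by (rule refl)
    thus ?thesis using True mu_bot by simp
  qed (simp)
qed

lemma mobius_ideal:
  assumes D: "D \<subseteq> P" "\<forall>x\<in>D. \<forall>y\<in>P. le y x \<longrightarrow> y \<in> D" "D \<noteq> {}"
  and xy: "x \<in> D" "y \<in> D"
  shows "mobius le D x y = mobius le P x y"
proof -
  interpret D: pos le D using ideal_props(4)[OF D] .
  define m' where "m' x y = (if x \<in> D \<and> y \<in> D then mobius le P x y else 0)" for x y
  have "is_mobius le D m'"
    unfolding is_mobius_def
  proof (intro conjI allI impI ballI)
    fix x y assume "x \<notin> D \<or> y \<notin> D" thus "m' x y = 0" unfolding m'_def by auto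
  next
    fix x y assume x: "x \<in> D" and y: "y \<in> D"
    have S: "{z\<in>D. le x z \<and> lt le z y} = {z\<in>P. le x z \<and> lt le z y}" using D y unfolding lt_def by blast
    have "(\<Sum>z\<in>{z\<in>D. le x z \<and> lt le z y}. m' x z) = (\<Sum>z\<in>{z\<in>P. le x z \<and> lt le z y}. mobius le P x z)"
      unfolding S by (rule sum.cong[OF refl]) (use S x m'_def in auto)
    moreover have "mobius le P x y = (if x = y then 1 else if lt le x y then - (\<Sum>z\<in>{z\<in>P. le x z \<and> lt le z y}. mobius le P x z) else 0)"
      using mobius_is x y D(1) unfolding is_mobius_def by blast
    ultimately show "m' x y = (if x = y then 1 else if lt le x y then - (\<Sum>z\<in>{z\<in>D. le x z \<and> lt le z y}. m' x z) else 0)"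
      using x y unfolding m'_def by simp
  qed
  hence "mobius le D = m'" using D.mobius_unique[OF D.mobius_is] by blast
  thus ?thesis using xy unfolding m'_def by simp
qed

end


locale gp = pos +
  fixes Q :: "'a set"
  assumes Qsub: "Q \<subseteq> P"
  and Qideal: "\<And>x y. x \<in> Q \<Longrightarrow> y \<in> P \<Longrightarrow> le y x \<Longrightarrow> y \<in> Q"
  and Qne: "Q \<noteq> {}"
  and QneP: "Q \<noteq> P"
  and g2: "\<And>b w. b \<in> atoms le P \<Longrightarrow> b \<notin> Q \<Longrightarrow> w \<in> Q \<Longrightarrow>
              \<exists>z. joins le P {b, w} = {z} \<and> rk le P z = Suc (rk le P w)"
  and g3: "\<And>x. x \<in> P \<Longrightarrow> x \<notin> Q \<Longrightarrow>
              \<exists>y\<in>Q. le y x \<and> rk le P x = Suc (rk le P y) \<and> (\<forall>q\<in>Q. le q x \<longrightarrow> le q y)"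
  and g4: "\<And>x. x \<in> P \<Longrightarrow> x \<notin> Q \<Longrightarrow> \<exists>b\<in>atoms le P. b \<notin> Q \<and> le b x"
begin

lemma Qideal': "\<forall>x\<in>Q. \<forall>y\<in>P. le y x \<longrightarrow> y \<in> Q" using Qideal by blast

lemma btQ: "bt \<in> Q" using ideal_props(1)[OF Qsub Qideal' Qne] .

lemma Qpos: "pos le Q" using ideal_props(4)[OF Qsub Qideal' Qne] .
lemma Qbot: "bot le Q = bt" using ideal_props(2)[OF Qsub Qideal' Qne] .
lemma Qrk: "x \<in> Q \<Longrightarrow> rk le Q x = rk le P x" using ideal_props(5)[OF Qsub Qideal' Qne] .

definition pi where "pi x = (THE y. y \<in> Q \<and> le y x \<and> (\<forall>q\<in>Q. le q x \<longrightarrow> le q y))"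
definition jn where "jn b w = (THE z. joins le P {b, w} = {z})"
definition EE where "EE = atoms le P - Q"

lemma atP: "atoms le P \<subseteq> P" unfolding atoms_def by blast

lemma pi_props:
  assumes "x \<in> P" "x \<notin> Q"
  shows "pi x \<in> Q" "le (pi x) x" "rk le P x = Suc (rk le P (pi x))" "\<And>q. q \<in> Q \<Longrightarrow> le q x \<Longrightarrow> le q (pi x)"
proof -
  obtain y where y: "y \<in> Q" "le y x" "rk le P x = Suc (rk le P y)" "\<forall>q\<in>Q. le q x \<longrightarrow> le q y"
    using g3[OF assms] by blast
  have "pi x = y" unfolding pi_def
  proof (rule the_equality)
    show "y \<in> Q \<and> le y x \<and> (\<forall>q\<in>Q. le q x \<longrightarrow> le q y)" using y by blast
    fix y' assume y': "y' \<in> Q \<and> le y' x \<and> (\<forall>q\<in>Q. le q x \<longrightarrow> le q y')"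
    have "le y y'" "le y' y" using y y' by blast+
    thus "y' = y" using lantisym y(1) y' Qsub by blast
  qed
  thus "pi x \<in> Q" "le (pi x) x" "rk le P x = Suc (rk le P (pi x))" "\<And>q. q \<in> Q \<Longrightarrow> le q x \<Longrightarrow> le q (pi x)"
    using y by auto
qed

lemma jn_props:
  assumes b: "b \<in> EE" and w: "w \<in> Q"
  shows "joins le P {b, w} = {jn b w}" "rk le P (jn b w) = Suc (rk le P w)"
    "jn b w \<in> P" "le b (jn b w)" "le w (jn b w)" "jn b w \<notin> Q"
    "\<And>u. u \<in> P \<Longrightarrow> le b u \<Longrightarrow> le w u \<Longrightarrow> le (jn b w) u"
proof -
  obtain z where z: "joins le P {b, w} = {z}" "rk le P z = Suc (rk le P w)"
    using g2[of b w] b w unfolding EE_def by blast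
  have "jn b w = z" unfolding jn_def using z(1) by simp
  thus j: "joins le P {b, w} = {jn b w}" "rk le P (jn b w) = Suc (rk le P w)" using z by auto
  have "jn b w \<in> joins le P {b, w}" using j by blast
  thus jP: "jn b w \<in> P" and bj: "le b (jn b w)" and "le w (jn b w)" unfolding joins_mem_iff by auto
  have bP: "b \<in> P" "b \<notin> Q" using b atP unfolding EE_def by auto
  show "jn b w \<notin> Q" using Qideal[of "jn b w" b] bP bj jP by blast
  show "\<And>u. u \<in> P \<Longrightarrow> le b u \<Longrightarrow> le w u \<Longrightarrow> le (jn b w) u"
    using joins_singleton_le[OF j(1)] by blast
qed

lemma pi_jn:
  assumes b: "b \<in> EE" and w: "w \<in> Q"
  shows "pi (jn b w) = w"
proof -
  note J = jn_props[OF b w]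
  note PI = pi_props[OF J(3) J(6)]
  have "le w (pi (jn b w))" using PI(4)[OF w J(5)] .
  moreover have "rk le P (pi (jn b w)) = rk le P w" using PI(3) J(2) by simp
  moreover have "w \<in> P" "pi (jn b w) \<in> P" using w PI(1) Qsub by auto
  ultimately have "w = pi (jn b w)" using eq_by_rk[of w "pi (jn b w)"] by simp
  thus ?thesis by simp
qed

lemma jn_pi:
  assumes x: "x \<in> P" "x \<notin> Q" and b: "b \<in> EE" "le b x"
  shows "jn b (pi x) = x"
proof -
  note PI = pi_props[OF x]
  note J = jn_props[OF b(1) PI(1)]
  have "le (jn b (pi x)) x" using J(7)[OF x(1) b(2) PI(2)] .
  moreover have "rk le P (jn b (pi x)) = rk le P x" using J(2) PI(3) by simp
  ultimately show ?thesis using eq_by_rk J(3) x(1) by blast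
qed

lemma finQ: "finite Q" using fin Qsub finite_subset by blast
lemma finE: "finite EE" using fin atP finite_subset unfolding EE_def by blast

lemma pi_lt:
  assumes z: "z \<in> P" "z \<notin> Q" and x: "x \<in> P" "x \<notin> Q" and zx: "le z x"
  shows "le (pi z) (pi x)"
proof -
  have "le (pi z) x" using ltrans[of "pi z" z x] pi_props(1,2)[OF z] z x zx Qsub by blast
  thus ?thesis using pi_props(4)[OF x] pi_props(1)[OF z] by blast
qed

lemma mu_Q:
  assumes x: "x \<in> P" "x \<notin> Q"
  shows "mobius le P bt x = - of_nat (card {b\<in>EE. le b x}) * mobius le P bt (pi x)"
  using x
proof (induction "rk le P x" arbitrary: x rule: less_induct)
  case less
  note x = less.prems
  define y where "y = pi x"
  note PI = pi_props[OF x, folded y_def]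
  have yP: "y \<in> P" using PI(1) Qsub by blast
  have xnb: "x \<noteq> bt" using x btQ by blast
  define Z where "Z = {z\<in>P. z \<notin> Q \<and> lt le z x}"
  have split: "{z\<in>P. lt le z x} = {z\<in>P. le z y} \<union> Z"
  proof
    show "{z\<in>P. lt le z x} \<subseteq> {z\<in>P. le z y} \<union> Z"
    proof
      fix z assume z: "z \<in> {z\<in>P. lt le z x}"
      show "z \<in> {z\<in>P. le z y} \<union> Z"
      proof (cases "z \<in> Q")
        case True thus ?thesis using PI(4)[OF True] z unfolding lt_def by blast
      next
        case False thus ?thesis using z unfolding Z_def by blast
      qed
    qed
    show "{z\<in>P. le z y} \<union> Z \<subseteq> {z\<in>P. lt le z x}"
    proof
      fix z assume z: "z \<in> {z\<in>P. le z y} \<union> Z"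
      show "z \<in> {z\<in>P. lt le z x}"
      proof (cases "z \<in> Z")
        case True thus ?thesis unfolding Z_def by blast
      next
        case False
        hence z': "z \<in> P" "le z y" using z by auto
        have "le z x" using ltrans[of z y x] z' yP x PI(2) by blast
        moreover have "z \<in> Q" using Qideal[OF PI(1) z'(1,2)] .
        ultimately show ?thesis using z' x unfolding lt_def by auto
      qed
    qed
  qed
  have disj: "{z\<in>P. le z y} \<inter> Z = {}"
  proof -
    have "z \<in> Q" if "z \<in> P" "le z y" for z using Qideal[OF PI(1)] that by blast
    thus ?thesis unfolding Z_def by blast
  qed
  have finZ: "finite Z" "finite {z\<in>P. le z y}" using fin unfolding Z_def by auto
  define S where "S = (\<Sum>w\<in>{w\<in>Q. lt le w y}. mobius le P bt w)"
  have S_eq: "S = (if y = bt then 1 else 0) - mobius le P bt y"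
  proof -
    have e1: "{w\<in>Q. lt le w y} = {z\<in>P. lt le z y}" using Qideal[OF PI(1)] Qsub unfolding lt_def by blast
    have e2: "{z\<in>P. le z y} = insert y {z\<in>P. lt le z y}" using yP lrefl unfolding lt_def by blast
    have "(\<Sum>z\<in>{z\<in>P. le z y}. mobius le P bt z) = mobius le P bt y + (\<Sum>z\<in>{z\<in>P. lt le z y}. mobius le P bt z)"
    proof -
      have yn: "y \<notin> {z\<in>P. lt le z y}" unfolding lt_def by simp
      have fy: "finite {z\<in>P. lt le z y}" using fin by simp
      show ?thesis unfolding e2 by (rule sum.insert[OF fy yn])
    qed
    thus ?thesis using mu_sum[OF yP] unfolding S_def e1 by simp
  qed
  have Zsum: "(\<Sum>z\<in>Z. mobius le P bt z) = - of_nat (card {b\<in>EE. le b x}) * S"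
  proof -
    have IH: "mobius le P bt z = - of_nat (card {b\<in>EE. le b z}) * mobius le P bt (pi z)" if z: "z \<in> Z" for z
    proof -
      have zz: "z \<in> P" "z \<notin> Q" "lt le z x" using z unfolding Z_def by auto
      have "rk le P z < rk le P x" using rk_lt zz x unfolding lt_def by blast
      thus ?thesis using less.hyps zz by blast
    qed
    have "(\<Sum>z\<in>Z. mobius le P bt z) = (\<Sum>z\<in>Z. - (\<Sum>b\<in>{b\<in>EE. le b z}. mobius le P bt (pi z)))"
      using IH by (intro sum.cong) auto
    also have "\<dots> = - (\<Sum>z\<in>Z. \<Sum>b\<in>{b\<in>EE. le b z}. mobius le P bt (pi z))"
      by (simp add: sum_negf)
    also have "(\<Sum>z\<in>Z. \<Sum>b\<in>{b\<in>EE. le b z}. mobius le P bt (pi z)) =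
               (\<Sum>b\<in>EE. \<Sum>z\<in>{z\<in>Z. le b z}. mobius le P bt (pi z))"
      by (rule sum.swap_restrict[OF finZ(1) finE])
    also have "\<dots> = (\<Sum>b\<in>EE. if le b x then S else 0)"
    proof (rule sum.cong[OF refl])
      fix b assume b: "b \<in> EE"
      show "(\<Sum>z\<in>{z\<in>Z. le b z}. mobius le P bt (pi z)) = (if le b x then S else 0)"
      proof (cases "le b x")
        case False
        have bP: "b \<in> P" using b atP unfolding EE_def by blast
        have "{z\<in>Z. le b z} = {}"
        proof -
          have "le b x" if "z \<in> Z" "le b z" for z
            using ltrans[of b z x] that bP x unfolding Z_def lt_def by blast
          thus ?thesis using False by blast
        qed
        hence "(\<Sum>z\<in>{z\<in>Z. le b z}. mobius le P bt (pi z)) = 0" by (simp only: sum.empty)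
        thus ?thesis using False by simp
      next
        case True
        have bij: "bij_betw pi {z\<in>Z. le b z} {w\<in>Q. lt le w y}"
        proof (rule bij_betw_byWitness[where f'="jn b"])
          show "\<forall>z\<in>{z\<in>Z. le b z}. jn b (pi z) = z" using jn_pi b unfolding Z_def by blast
          show "\<forall>w\<in>{w\<in>Q. lt le w y}. pi (jn b w) = w" using pi_jn b by blast
          show "pi ` {z\<in>Z. le b z} \<subseteq> {w\<in>Q. lt le w y}"
          proof
            fix w assume "w \<in> pi ` {z\<in>Z. le b z}"
            then obtain z where z: "z \<in> Z" "le b z" "w = pi z" by blast
            have zz: "z \<in> P" "z \<notin> Q" "lt le z x" using z unfolding Z_def by auto
            have wQ: "w \<in> Q" using pi_props(1)[OF zz(1,2)] z(3) by simp
            have wy: "le w y" using pi_lt[OF zz(1,2) x] zz(3) z(3) unfolding y_def lt_def by blast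
            have "rk le P z < rk le P x" using rk_lt zz x unfolding lt_def by blast
            hence "rk le P w < rk le P y" using pi_props(3)[OF zz(1,2)] PI(3) z(3) by simp
            hence "w \<noteq> y" by auto
            thus "w \<in> {w\<in>Q. lt le w y}" using wQ wy unfolding lt_def by blast
          qed
          show "jn b ` {w\<in>Q. lt le w y} \<subseteq> {z\<in>Z. le b z}"
          proof
            fix z assume "z \<in> jn b ` {w\<in>Q. lt le w y}"
            then obtain w where w: "w \<in> Q" "lt le w y" "z = jn b w" by blast
            note J = jn_props[OF b w(1)]
            have wP: "w \<in> P" using w Qsub by blast
            have wx: "le w x" using ltrans[of w y x] wP yP x PI(2) w(2) unfolding lt_def by blast
            have zx: "le z x" using J(7)[OF x(1) True wx] w(3) by simp
            have "rk le P w < rk le P y" using rk_lt wP yP w(2) unfolding lt_def by blast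
            hence "rk le P z < rk le P x" using J(2) PI(3) w(3) by simp
            hence "z \<noteq> x" by auto
            thus "z \<in> {z\<in>Z. le b z}" using J(3,4,6) zx w(3) unfolding Z_def lt_def by auto
          qed
        qed
        have "(\<Sum>z\<in>{z\<in>Z. le b z}. mobius le P bt (pi z)) = (\<Sum>w\<in>{w\<in>Q. lt le w y}. mobius le P bt w)"
          by (rule sum.reindex_bij_betw[OF bij])
        thus ?thesis using True unfolding S_def by simp
      qed
    qed
    also have "\<dots> = (\<Sum>b\<in>{b\<in>EE. le b x}. S)"
    proof -
      have e: "EE \<inter> {b. le b x} = {b\<in>EE. le b x}" by blast
      show ?thesis using finE by (simp add: sum.If_cases e)
    qed
    also have "\<dots> = of_nat (card {b\<in>EE. le b x}) * S" by simp
    finally show ?thesis by simp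
  qed
  have mx: "mobius le P bt x = - ((if y = bt then 1 else 0) + (\<Sum>z\<in>Z. mobius le P bt z))"
  proof -
    have "mobius le P bt x = - (\<Sum>z\<in>{z\<in>P. lt le z x}. mobius le P bt z)" using mu_rec[OF x(1) xnb] .
    also have "(\<Sum>z\<in>{z\<in>P. lt le z x}. mobius le P bt z) = (\<Sum>z\<in>{z\<in>P. le z y}. mobius le P bt z) + (\<Sum>z\<in>Z. mobius le P bt z)"
      unfolding split by (rule sum.union_disjoint[OF finZ(2) finZ(1) disj])
    finally show ?thesis using mu_sum[OF yP] by simp
  qed
  show ?case
  proof (cases "y = bt")
    case False
    thus ?thesis using mx Zsum S_eq unfolding y_def by simp
  next
    case True
    have rx: "rk le P x = 1" using PI(3) True rk_bot by simp
    have xE: "x \<in> EE" using rx x unfolding EE_def atoms_def by blast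
    have "{b\<in>EE. le b x} = {x}"
    proof
      show "{x} \<subseteq> {b\<in>EE. le b x}" using xE lrefl x by blast
      show "{b\<in>EE. le b x} \<subseteq> {x}"
      proof
        fix b assume b: "b \<in> {b\<in>EE. le b x}"
        have bat: "b \<in> atoms le P" "b \<in> P" using b atP unfolding EE_def by auto
        have xat: "x \<in> atoms le P" using xE unfolding EE_def by blast
        have "b = bt \<or> b = x" using atom_le[OF xat bat(2)] b by blast
        thus "b \<in> {x}" using atom_ne_bot[OF bat(1)] by blast
      qed
    qed
    thus ?thesis using mx Zsum S_eq True mu_bot unfolding y_def by simp
  qed
qed

end


context gp begin

lemma rank_P: "rank le P = Suc (rank le Q)"
proof -
  interpret Q: pos le Q by (rule Qpos)
  have le: "rk le P x \<le> Suc (rank le Q)" if x: "x \<in> P" for x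
  proof (cases "x \<in> Q")
    case True thus ?thesis using Q.rk_le_rank[OF True] Qrk[OF True] by simp
  next
    case False
    note PI = pi_props[OF x False]
    show ?thesis using Q.rk_le_rank[OF PI(1)] Qrk[OF PI(1)] PI(3) by simp
  qed
  obtain w where w: "w \<in> Q" "rk le Q w = rank le Q" using Q.rank_attained by blast
  obtain x0 where x0: "x0 \<in> P" "x0 \<notin> Q" using QneP Qsub by blast
  obtain b where b: "b \<in> atoms le P" "b \<notin> Q" using g4[OF x0] by blast
  have bE: "b \<in> EE" using b unfolding EE_def by blast
  note J = jn_props[OF bE w(1)]
  have "rk le P (jn b w) = Suc (rank le Q)" using J(2) w Qrk[OF w(1)] by simp
  hence mem: "Suc (rank le Q) \<in> rk le P ` P" using J(3) by (metis image_eqI)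
  show ?thesis unfolding rank_def[of le P]
    by (rule Max_eqI) (use fin le mem in auto)
qed

lemma charpoly_fact: "charpoly le P = (monom 1 1 - of_nat (card EE)) * charpoly le Q"
proof -
  interpret Q: pos le Q by (rule Qpos)
  define cQ where "cQ = charpoly le Q"
  have cQ_def': "cQ = (\<Sum>w\<in>Q. monom (mobius le P bt w) (rank le Q - rk le P w))"
    unfolding cQ_def charpoly_def Qbot
    by (rule sum.cong[OF refl]) (simp add: Qrk mobius_ideal[OF Qsub Qideal' Qne btQ])
  have bP: "bot le P = bt" unfolding bt_def by simp
  have split: "charpoly le P = (\<Sum>x\<in>P - Q. monom (mobius le P bt x) (rank le P - rk le P x)) +
                               (\<Sum>x\<in>Q. monom (mobius le P bt x) (rank le P - rk le P x))"
    unfolding charpoly_def bP by (rule sum.subset_diff[OF Qsub fin])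
  have partQ: "(\<Sum>x\<in>Q. monom (mobius le P bt x) (rank le P - rk le P x)) = monom 1 1 * cQ"
  proof -
    have "monom (mobius le P bt x) (rank le P - rk le P x) = monom 1 1 * monom (mobius le P bt x) (rank le Q - rk le P x)"
      if x: "x \<in> Q" for x
    proof -
      have "rk le P x \<le> rank le Q" using Q.rk_le_rank[OF x] Qrk[OF x] by simp
      hence "rank le P - rk le P x = 1 + (rank le Q - rk le P x)" using rank_P by simp
      thus ?thesis by (simp add: mult_monom)
    qed
    hence "(\<Sum>x\<in>Q. monom (mobius le P bt x) (rank le P - rk le P x)) =
           (\<Sum>x\<in>Q. monom 1 1 * monom (mobius le P bt x) (rank le Q - rk le P x))"
      by (rule sum.cong[OF refl])
    also have "\<dots> = monom 1 1 * cQ" unfolding cQ_def' by (simp add: sum_distrib_left)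
    finally show ?thesis .
  qed
  define g where "g x = monom (mobius le P bt (pi x)) (rank le Q - rk le P (pi x))" for x
  have partE: "(\<Sum>x\<in>P - Q. monom (mobius le P bt x) (rank le P - rk le P x)) = - (of_nat (card EE) * cQ)"
  proof -
    have pt: "monom (mobius le P bt x) (rank le P - rk le P x) = - (\<Sum>b\<in>{b\<in>EE. le b x}. g x)"
      if x: "x \<in> P - Q" for x
    proof -
      have x': "x \<in> P" "x \<notin> Q" using x by auto
      note PI = pi_props[OF x']
      have r: "rank le P - rk le P x = rank le Q - rk le P (pi x)" using rank_P PI(3) by simp
      have "(\<Sum>b\<in>{b\<in>EE. le b x}. g x) = of_nat (card {b\<in>EE. le b x}) * g x" by simp
      also have "\<dots> = monom (of_nat (card {b\<in>EE. le b x}) * mobius le P bt (pi x)) (rank le Q - rk le P (pi x))"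
        unfolding g_def of_nat_mult_conv_smult smult_monom by simp
      finally show ?thesis unfolding mu_Q[OF x'] r by (simp add: minus_monom)
    qed
    have "(\<Sum>x\<in>P - Q. monom (mobius le P bt x) (rank le P - rk le P x)) = (\<Sum>x\<in>P - Q. - (\<Sum>b\<in>{b\<in>EE. le b x}. g x))"
      using pt by (rule sum.cong[OF refl])
    also have "\<dots> = - (\<Sum>x\<in>P - Q. \<Sum>b\<in>{b\<in>EE. le b x}. g x)" by (simp add: sum_negf)
    also have "(\<Sum>x\<in>P - Q. \<Sum>b\<in>{b\<in>EE. le b x}. g x) = (\<Sum>b\<in>EE. \<Sum>x\<in>{x\<in>P - Q. le b x}. g x)"
      using sum.swap_restrict[OF _ finE, of "P - Q" "\<lambda>x b. g x" "\<lambda>x b. le b x"] fin by simp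
    also have "\<dots> = (\<Sum>b\<in>EE. cQ)"
    proof (rule sum.cong[OF refl])
      fix b assume b: "b \<in> EE"
      have bij: "bij_betw pi {x\<in>P - Q. le b x} Q"
      proof (rule bij_betw_byWitness[where f'="jn b"])
        show "\<forall>x\<in>{x\<in>P - Q. le b x}. jn b (pi x) = x" using jn_pi b by blast
        show "\<forall>w\<in>Q. pi (jn b w) = w" using pi_jn b by blast
        show "pi ` {x\<in>P - Q. le b x} \<subseteq> Q" using pi_props(1) by blast
        show "jn b ` Q \<subseteq> {x\<in>P - Q. le b x}" using jn_props(3,4,6)[OF b] by blast
      qed
      have "(\<Sum>x\<in>{x\<in>P - Q. le b x}. g x) = (\<Sum>w\<in>Q. monom (mobius le P bt w) (rank le Q - rk le P w))"
        unfolding g_def by (rule sum.reindex_bij_betw[OF bij])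
      thus "(\<Sum>x\<in>{x\<in>P - Q. le b x}. g x) = cQ" unfolding cQ_def' .
    qed
    also have "\<dots> = of_nat (card EE) * cQ" by simp
    finally show ?thesis .
  qed
  show ?thesis unfolding split partQ partE cQ_def[symmetric] by (simp add: algebra_simps)
qed

lemma charpoly_dvd: "charpoly le Q dvd charpoly le P"
  unfolding charpoly_fact by simp

lemma iso_up:
  assumes a: "a \<in> EE"
  shows "bij_betw (jn a) Q (up le P a)" "\<And>u v. u \<in> Q \<Longrightarrow> v \<in> Q \<Longrightarrow> le u v \<longleftrightarrow> le (jn a u) (jn a v)"
proof -
  have aP: "a \<in> P" "a \<notin> Q" using a atP unfolding EE_def by auto
  show "bij_betw (jn a) Q (up le P a)"
  proof (rule bij_betw_byWitness[where f'=pi])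
    show "\<forall>w\<in>Q. pi (jn a w) = w" using pi_jn a by blast
    show "\<forall>z\<in>up le P a. jn a (pi z) = z"
    proof
      fix z assume z: "z \<in> up le P a"
      have "z \<notin> Q" using Qideal[of z a] z aP unfolding up_def by blast
      thus "jn a (pi z) = z" using jn_pi[of z a] z a unfolding up_def by blast
    qed
    show "jn a ` Q \<subseteq> up le P a" using jn_props(3,4)[OF a] unfolding up_def by blast
    show "pi ` up le P a \<subseteq> Q"
    proof
      fix w assume "w \<in> pi ` up le P a"
      then obtain z where z: "z \<in> up le P a" "w = pi z" by blast
      have "z \<notin> Q" using Qideal[of z a] z aP unfolding up_def by blast
      thus "w \<in> Q" using pi_props(1)[of z] z unfolding up_def by blast
    qed
  qed
  fix u v assume u: "u \<in> Q" and v: "v \<in> Q"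
  note Ju = jn_props[OF a u] and Jv = jn_props[OF a v]
  have uP: "u \<in> P" and vP: "v \<in> P" using u v Qsub by auto
  show "le u v \<longleftrightarrow> le (jn a u) (jn a v)"
  proof
    assume uv: "le u v"
    have "le u (jn a v)" using ltrans[OF uP vP Jv(3) uv Jv(5)] .
    thus "le (jn a u) (jn a v)" using Ju(7)[OF Jv(3) Jv(4)] by blast
  next
    assume j: "le (jn a u) (jn a v)"
    have "le u (jn a v)" using ltrans[OF uP Ju(3) Jv(3) Ju(5) j] .
    hence "le u (pi (jn a v))" using pi_props(4)[OF Jv(3) Jv(6) u] by blast
    thus "le u v" using pi_jn[OF a v] by simp
  qed
qed

end


context pos begin

lemma strict_mono_rk:
  assumes "y0 \<in> P" "c \<in> P" "le y0 c"
    and fP: "\<And>s. s \<in> P \<Longrightarrow> le y0 s \<Longrightarrow> le s c \<Longrightarrow> f s \<in> P"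
    and fm: "\<And>s t. s \<in> P \<Longrightarrow> t \<in> P \<Longrightarrow> le y0 s \<Longrightarrow> le s t \<Longrightarrow> le t c \<Longrightarrow> s \<noteq> t \<Longrightarrow> le (f s) (f t) \<and> f s \<noteq> f t"
  shows "rk le P (f y0) + (rk le P c - rk le P y0) \<le> rk le P (f c)"
proof -
  have "\<forall>y. y \<in> P \<longrightarrow> le y0 y \<longrightarrow> le y c \<longrightarrow> rk le P c - rk le P y = n \<longrightarrow> rk le P (f y) + (rk le P c - rk le P y) \<le> rk le P (f c)" for n
  proof (induction n rule: less_induct)
    case (less n)
    show ?case
    proof (intro allI impI)
      fix y assume y: "y \<in> P" "le y0 y" "le y c" "rk le P c - rk le P y = n"
      show "rk le P (f y) + (rk le P c - rk le P y) \<le> rk le P (f c)"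
      proof (cases "y = c")
        case True thus ?thesis by simp
      next
        case False
        obtain v where v: "covers le P y v" "le v c" using cover_exists[OF y(1) assms(2) y(3) False] by blast
        have vP: "v \<in> P" and yv: "le y v" "y \<noteq> v" using v(1) unfolding covers_def lt_def by auto
        have rv: "rk le P v = Suc (rk le P y)" using cover_rk[OF v(1)] .
        have rc: "rk le P v \<le> rk le P c" using rk_mono[OF vP assms(2) v(2)] .
        have y0v: "le y0 v" using ltrans[OF assms(1) y(1) vP y(2) yv(1)] .
        have "rk le P c - rk le P v < n" using rv rc y(4) by simp
        hence ih: "rk le P (f v) + (rk le P c - rk le P v) \<le> rk le P (f c)" using less.IH vP y0v v(2) by blast
        have fyv: "le (f y) (f v)" "f y \<noteq> f v" using fm[OF y(1) vP y(2) yv(1) v(2) yv(2)] by auto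
        have "f y \<in> P" "f v \<in> P" using fP y vP y0v v(2) by auto
        hence "rk le P (f y) < rk le P (f v)" using rk_lt fyv by blast
        thus ?thesis using ih rv rc by linarith
      qed
    qed
  qed
  thus ?thesis using assms(1,3) lrefl[OF assms(1)] by blast
qed

end

context lgeo begin

lemma maximal_elem_iff: "m \<in> maximal_elems le P \<longleftrightarrow> m \<in> P \<and> (\<forall>y\<in>P. le m y \<longrightarrow> y = m)"
  unfolding maximal_elems_def lt_def by blast

lemma tm_gp:
  assumes tm: "TM_ideal le P Q" and Qne: "Q \<noteq> {}" and QneP: "Q \<noteq> P"
    and rk: "rank le P = Suc (rank le Q)"
  shows "gp le P Q" and "join_closed le P Q"
proof -
  have M: "M_ideal le P Q" using tm unfolding TM_ideal_def by blast
  have oi: "order_ideal le P Q" and pu: "pure le Q" and jc: "join_closed le P Q"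
    and md: "\<forall>x\<in>maximal_elems le P. \<exists>y\<in>maximal_elems le Q. modular_elem le (down le P x) y"
    using M unfolding M_ideal_def by blast+
  have card1: "\<forall>y\<in>Q. \<forall>a\<in>atoms le P - atoms le Q. card (joins le P {a, y}) = 1"
    using tm unfolding TM_ideal_def by blast
  show "join_closed le P Q" by (rule jc)
  have Qsub: "Q \<subseteq> P" using oi unfolding order_ideal_def by blast
  have Qid: "\<forall>x\<in>Q. \<forall>y\<in>P. le y x \<longrightarrow> y \<in> Q" using oi unfolding order_ideal_def by blast
  interpret Q: pos le Q using ideal_props(4)[OF Qsub Qid Qne] .
  have Qrk: "\<And>x. x \<in> Q \<Longrightarrow> rk le Q x = rk le P x" using ideal_props(5)[OF Qsub Qid Qne] .
  have atQ: "atoms le Q = atoms le P \<inter> Q" unfolding atoms_def using Qrk Qsub by auto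
  have atP: "atoms le P \<subseteq> P" unfolding atoms_def by blast
  have jcQ: "\<And>T. T \<subseteq> Q \<Longrightarrow> joins le P T \<subseteq> Q" using jc unfolding join_closed_def by blast
  have maxQ: "rk le P c = rank le Q" if c: "c \<in> maximal_elems le Q" for c
  proof -
    obtain w where w: "w \<in> Q" "rk le Q w = rank le Q" using Q.rank_attained by blast
    obtain c' where c': "c' \<in> Q" "le w c'" "\<forall>y\<in>Q. le c' y \<longrightarrow> y = c'" using Q.max_above[OF _ w(1)] by blast
    have c'm: "c' \<in> maximal_elems le Q" unfolding maximal_elems_def lt_def using c' by blast
    have "rk le Q w \<le> rk le Q c'" using Q.rk_mono[OF w(1) c'(1,2)] .
    hence "rk le Q c' = rank le Q" using Q.rk_le_rank[OF c'(1)] w(2) by simp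
    moreover have "rk le Q c = rk le Q c'" using pu c c'm unfolding pure_def by blast
    moreover have "c \<in> Q" using c unfolding maximal_elems_def by blast
    ultimately show ?thesis using Qrk by simp
  qed
  show "gp le P Q"
  proof
    show "Q \<subseteq> P" by (rule Qsub)
    show "\<And>x y. x \<in> Q \<Longrightarrow> y \<in> P \<Longrightarrow> le y x \<Longrightarrow> y \<in> Q" using Qid by blast
    show "Q \<noteq> {}" by (rule Qne)
    show "Q \<noteq> P" by (rule QneP)
  next
    fix b w assume b: "b \<in> atoms le P" "b \<notin> Q" and w: "w \<in> Q"
    have "b \<in> atoms le P - atoms le Q" using b atQ by blast
    hence "card (joins le P {b, w}) = 1" using card1 w by blast
    then obtain z where z: "joins le P {b, w} = {z}" using card_1_singletonE by blast
    have wP: "w \<in> P" using w Qsub by blast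
    have nb: "\<not> le b w" using b w Qid atP by blast
    have "z \<in> joins le P {b, w}" using z by blast
    from cover_join(2)[OF b(1) wP nb this] z
    show "\<exists>z. joins le P {b, w} = {z} \<and> rk le P z = Suc (rk le P w)" by blast
  next
    fix x assume x: "x \<in> P" "x \<notin> Q"
    have xj: "x \<in> joins le P {b\<in>atoms le P. le b x}" using elem_join_atoms[OF x(1)] .
    show "\<exists>b\<in>atoms le P. b \<notin> Q \<and> le b x"
    proof (rule ccontr)
      assume "\<not> (\<exists>b\<in>atoms le P. b \<notin> Q \<and> le b x)"
      hence "{b\<in>atoms le P. le b x} \<subseteq> Q" by blast
      thus False using jcQ xj x(2) by blast
    qed
  next
    fix x assume x: "x \<in> P" "x \<notin> Q"
    obtain m where m: "m \<in> P" "le x m" "\<forall>y\<in>P. le m y \<longrightarrow> y = m" using max_above[OF _ x(1)] by blast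
    have mm: "m \<in> maximal_elems le P" using m maximal_elem_iff by blast
    obtain c where c: "c \<in> maximal_elems le Q" "modular_elem le (down le P m) c" using md mm by blast
    let ?L = "down le P m"
    have cQ: "c \<in> Q" using c(1) unfolding maximal_elems_def by blast
    have cP: "c \<in> P" using cQ Qsub by blast
    have cL: "c \<in> ?L" using c(2) unfolding modular_elem_def by blast
    have cm: "le c m" using cL unfolding down_def by blast
    have xL: "x \<in> ?L" using x m unfolding down_def by blast
    have rc: "rk le P c = rank le Q" using maxQ[OF c(1)] .
    have cmax: "\<forall>y\<in>Q. le c y \<longrightarrow> y = c" using c(1) unfolding maximal_elems_def lt_def by blast
    have Qc: "le q c" if q: "q \<in> Q" "le q m" for q
    proof -
      have qP: "q \<in> P" using q Qsub by blast
      define s where "s = join le ?L q c"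
      have sj: "s \<in> joins le P {q, c}" unfolding s_def using join_in_joins[OF m(1) q(2) cm qP cP] .
      have sQ: "s \<in> Q" using jcQ[of "{q, c}"] q cQ sj by blast
      have "le c s" "le q s" using sj unfolding joins_mem_iff by auto
      thus ?thesis using cmax sQ by metis
    qed
    define y where "y = meet le ?L c x"
    have G: "is_glb le ?L {c, x} y" unfolding y_def using meet_glb[OF m(1) cL xL] .
    have yL: "y \<in> ?L" and yc: "le y c" and yx: "le y x" using G unfolding is_glb_def by auto
    have yP: "y \<in> P" using yL unfolding down_def by blast
    have yQ: "y \<in> Q" using Qid cQ yP yc by blast
    have ymax: "le q y" if q: "q \<in> Q" "le q x" for q
    proof -
      have qP: "q \<in> P" using q Qsub by blast
      have qm: "le q m" using ltrans[OF qP x(1) m(1) q(2) m(2)] .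
      have "q \<in> ?L" using qP qm unfolding down_def by blast
      moreover have "le q c" using Qc[OF q(1) qm] .
      ultimately show ?thesis using G q(2) unfolding is_glb_def by blast
    qed
    have yne: "y \<noteq> x" using yQ x(2) by blast
    have rlt: "rk le P y < rk le P x" using rk_lt[OF yP x(1) yx yne] .
    have modid: "\<And>s. s \<in> ?L \<Longrightarrow> le s c \<Longrightarrow> meet le ?L c (join le ?L x s) = join le ?L (meet le ?L c x) s"
      using c(2) xL unfolding modular_elem_def by blast
    define f where "f s = join le ?L x s" for s
    have fL: "f s \<in> ?L" "le x (f s)" "le s (f s)" if "s \<in> ?L" for s
      using join_lub[OF m(1) xL that] unfolding f_def is_lub_def by auto
    have fret: "meet le ?L c (f s) = s" if s: "s \<in> P" "le y s" "le s c" for s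
    proof -
      have sm: "le s m" using ltrans[OF s(1) cP m(1) s(3) cm] .
      have sL: "s \<in> ?L" using s(1) sm unfolding down_def by blast
      have "meet le ?L c (f s) = join le ?L y s" using modid[OF sL s(3)] unfolding f_def y_def .
      also have "join le ?L y s = s"
      proof (rule join_eqI)
        show "?L \<subseteq> P" unfolding down_def by blast
        show "is_lub le ?L {y, s} s" unfolding is_lub_def using sL s(2) lrefl[OF s(1)] by blast
      qed
      finally show ?thesis .
    qed
    have fmono: "le (f s) (f t) \<and> f s \<noteq> f t"
      if st: "s \<in> P" "t \<in> P" "le y s" "le s t" "le t c" "s \<noteq> t" for s t
    proof
      have tm': "le t m" using ltrans[OF st(2) cP m(1) st(5) cm] .
      have tL: "t \<in> ?L" using st(2) tm' unfolding down_def by blast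
      have sm: "le s m" using ltrans[OF st(1) st(2) m(1) st(4) tm'] .
      have sL: "s \<in> ?L" using st(1) sm unfolding down_def by blast
      have sc: "le s c" using ltrans[OF st(1) st(2) cP st(4) st(5)] .
      have yt: "le y t" using ltrans[OF yP st(1) st(2) st(3) st(4)] .
      have ft: "le x (f t)" "le t (f t)" "f t \<in> ?L" using fL[OF tL] by auto
      have "le s (f t)" using ltrans[OF st(1) st(2) _ st(4) ft(2)] ft(3) unfolding down_def by blast
      thus "le (f s) (f t)" using join_lub[OF m(1) xL sL] ft(1,3) unfolding f_def is_lub_def by blast
      show "f s \<noteq> f t"
      proof
        assume "f s = f t"
        hence "meet le ?L c (f s) = meet le ?L c (f t)" by simp
        thus False using fret[OF st(1) st(3) sc] fret[OF st(2) yt st(5)] st(6) by simp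
      qed
    qed
    have fP: "f s \<in> P" if "s \<in> P" "le y s" "le s c" for s
    proof -
      have "le s m" using ltrans[OF that(1) cP m(1) that(3) cm] .
      hence "s \<in> ?L" using that(1) unfolding down_def by blast
      thus ?thesis using fL unfolding down_def by blast
    qed
    have yc': "le y c" by (rule yc)
    have chain: "rk le P (f y) + (rk le P c - rk le P y) \<le> rk le P (f c)"
      using strict_mono_rk[where f=f, OF yP cP yc' fP fmono] by blast
    have fy: "f y = x"
    proof -
      have "join le ?L x y = x"
      proof (rule join_eqI)
        show "?L \<subseteq> P" unfolding down_def by blast
        show "is_lub le ?L {x, y} x" unfolding is_lub_def using xL yx lrefl[OF x(1)] by blast
      qed
      thus ?thesis unfolding f_def .
    qed
    have fcm: "rk le P (f c) \<le> rk le P m"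
    proof -
      have "f c \<in> ?L" using fL[OF cL] by blast
      hence "f c \<in> P" "le (f c) m" unfolding down_def by auto
      thus ?thesis using rk_mono m(1) by blast
    qed
    have "rk le P m \<le> Suc (rank le Q)" using rk_le_rank[OF m(1)] rk by simp
    moreover have "rk le P y \<le> rank le Q" using rk_mono[OF yP cP yc] rc by simp
    moreover have "rk le P x + (rk le P c - rk le P y) \<le> rk le P (f c)" using chain fy by simp
    ultimately have "rk le P x \<le> Suc (rk le P y)" using fcm rc by linarith
    hence "rk le P x = Suc (rk le P y)" using rlt by simp
    thus "\<exists>y\<in>Q. le y x \<and> rk le P x = Suc (rk le P y) \<and> (\<forall>q\<in>Q. le q x \<longrightarrow> le q y)"
      using yQ yx ymax by blast
  qed
qed

end


lemma list_cch_gen: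
  "cs \<noteq> [] \<Longrightarrow> (\<forall>i. Suc i < length cs \<longrightarrow> covers le P (cs ! i) (cs ! Suc i)) \<Longrightarrow>
     cch le P (hd cs) (last cs) (length cs - 1)"
proof (induction cs rule: rev_induct)
  case Nil thus ?case by simp
next
  case (snoc x xs)
  show ?case
  proof (cases "xs = []")
    case True thus ?thesis by (simp add: cch0)
  next
    case False
    have "\<forall>i. Suc i < length xs \<longrightarrow> covers le P (xs ! i) (xs ! Suc i)"
    proof (intro allI impI)
      fix i assume i: "Suc i < length xs"
      have "covers le P ((xs @ [x]) ! i) ((xs @ [x]) ! Suc i)" using snoc.prems(2) i by simp
      thus "covers le P (xs ! i) (xs ! Suc i)" using i by (simp add: nth_append)
    qed
    from snoc.IH[OF False this] have c: "cch le P (hd xs) (last xs) (length xs - 1)" .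
    have "Suc (length xs - 1) < length (xs@[x])" using False by simp
    from snoc.prems(2)[rule_format, OF this] have cv: "covers le P ((xs @ [x]) ! (length xs - 1)) ((xs @ [x]) ! Suc (length xs - 1))" .
    have e1: "(xs @ [x]) ! (length xs - 1) = last xs" using False by (simp add: nth_append last_conv_nth)
    have e2: "(xs @ [x]) ! Suc (length xs - 1) = x" using False by (simp add: nth_append)
    have "covers le P (last xs) x" using cv e1 e2 by simp
    from cchS[OF c this] show ?thesis using False by simp
  qed
qed

context lgeo begin

lemma JM:
  assumes j: "j \<in> joins le P T" and T: "T \<subseteq> P" and s: "s \<in> P" "\<forall>t\<in>T. le t s"
    and z: "z \<in> P" "le j z" "le s z"
  shows "le j s"
proof -
  have jP: "j \<in> P" and jT: "\<forall>t\<in>T. le t j" and jmin: "\<forall>s\<in>P. (\<forall>t\<in>T. le t s) \<longrightarrow> le s j \<longrightarrow> s = j"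
    using j unfolding joins_mem_iff by auto
  let ?D = "down le P z"
  have jD: "j \<in> ?D" and sD: "s \<in> ?D" using jP s z unfolding down_def by auto
  note G = meet_glb[OF z(1) jD sD]
  define m where "m = meet le ?D j s"
  have mD: "m \<in> ?D" and mj: "le m j" and ms: "le m s" using G unfolding m_def is_glb_def by auto
  have mP: "m \<in> P" using mD unfolding down_def by blast
  have "le t m" if t: "t \<in> T" for t
  proof -
    have tP: "t \<in> P" using t T by blast
    have "le t z" using ltrans[OF tP jP z(1) _ z(2)] jT t by blast
    hence "t \<in> ?D" using tP unfolding down_def by blast
    thus ?thesis using G jT s(2) t unfolding m_def is_glb_def by blast
  qed
  hence "m = j" using jmin mP mj by blast
  thus ?thesis using ms by simp
qed

end

context pos begin

lemma lub_imp_glb: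
  assumes lub: "\<And>u v. u \<in> P \<Longrightarrow> v \<in> P \<Longrightarrow> \<exists>s. is_lub le P {u, v} s"
    and u: "u \<in> P" and v: "v \<in> P"
  shows "\<exists>g. is_glb le P {u, v} g"
proof -
  let ?C = "{z\<in>P. le z u \<and> le z v}"
  have "bt \<in> ?C" using bot_in bot_le u v by blast
  hence "?C \<noteq> {}" by blast
  from max_exists[OF _ this] obtain g where g: "g \<in> ?C" "\<forall>y\<in>?C. le g y \<longrightarrow> y = g" by blast
  have "is_glb le P {u, v} g" unfolding is_glb_def
  proof (intro conjI ballI impI)
    show "g \<in> P" using g by blast
    show "\<And>t. t \<in> {u, v} \<Longrightarrow> le g t" using g by blast
    fix c assume c: "c \<in> P" "\<forall>t\<in>{u, v}. le c t"
    have gP: "g \<in> P" using g by blast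
    obtain s where s: "is_lub le P {c, g} s" using lub[OF c(1) gP] by blast
    have "le s u" "le s v" using s c g u v unfolding is_lub_def by auto
    hence "s \<in> ?C" using s unfolding is_lub_def by blast
    moreover have "le g s" using s unfolding is_lub_def by blast
    ultimately have "s = g" using g by blast
    thus "le c g" using s unfolding is_lub_def by blast
  qed
  thus ?thesis by blast
qed

end

locale lgp = lgeo le P + gp le P Q for le :: "'a \<Rightarrow> 'a \<Rightarrow> bool" and P Q +
  assumes jc: "join_closed le P Q"
begin

lemma jcQ: "T \<subseteq> Q \<Longrightarrow> joins le P T \<subseteq> Q" using jc unfolding join_closed_def by blast

lemma Q_sub_gen:
  assumes "atoms le P \<inter> Q \<subseteq> B"
  shows "Q \<subseteq> subposet_gen le P B"
proof
  fix q assume q: "q \<in> Q"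
  have qP: "q \<in> P" using q Qsub by blast
  show "q \<in> subposet_gen le P B"
  proof (cases "q = bt")
    case True thus ?thesis unfolding subposet_gen_def bt_def by simp
  next
    case False
    let ?T = "{b\<in>atoms le P. le b q}"
    have T: "?T \<subseteq> B" using assms Qideal[OF q] atP by blast
    have qj: "q \<in> joins le P ?T" using elem_join_atoms[OF qP] .
    have "?T \<noteq> {}"
    proof
      assume e: "?T = {}"
      have "q \<in> joins le P {}" using qj unfolding e .
      thus False using joins_empty False by simp
    qed
    thus ?thesis unfolding subposet_gen_def using T qj by blast
  qed
qed

lemma gen_eq_Q:
  assumes "atoms le P \<inter> Q \<subseteq> B" "B \<subseteq> Q"
  shows "subposet_gen le P B = Q"
proof
  show "Q \<subseteq> subposet_gen le P B" using Q_sub_gen[OF assms(1)] .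
  show "subposet_gen le P B \<subseteq> Q"
    unfolding subposet_gen_def bt_def[symmetric] using btQ jcQ assms(2) by blast
qed

end

locale restr = lgp +
  fixes B :: "'a set"
  assumes B1: "atoms le P \<inter> Q \<subseteq> B" and B2: "B \<subseteq> atoms le P" and B3: "B - Q \<noteq> {}"
begin

definition R where "R = subposet_gen le P B"

lemma memR: "u \<in> R \<longleftrightarrow> (\<exists>T\<subseteq>B. u \<in> joins le P T)"
proof
  assume "u \<in> R"
  hence "u = bt \<or> (\<exists>T. T \<subseteq> B \<and> T \<noteq> {} \<and> u \<in> joins le P T)"
    unfolding R_def subposet_gen_def bt_def by blast
  thus "\<exists>T\<subseteq>B. u \<in> joins le P T" using joins_empty by blast
next
  assume "\<exists>T\<subseteq>B. u \<in> joins le P T"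
  then obtain T where T: "T \<subseteq> B" "u \<in> joins le P T" by blast
  show "u \<in> R"
  proof (cases "T = {}")
    case True thus ?thesis using T joins_empty unfolding R_def subposet_gen_def bt_def by simp
  next
    case False thus ?thesis using T unfolding R_def subposet_gen_def by blast
  qed
qed

lemma RP: "R \<subseteq> P" using memR joins_sub(2) by blast
lemma QR: "Q \<subseteq> R" unfolding R_def using Q_sub_gen[OF B1] .
lemma btR: "bt \<in> R" using QR btQ by blast
lemma BP: "B \<subseteq> P" using B2 atP by blast

lemma R_gen_atom:
  assumes "u \<in> R" "u \<notin> Q"
  shows "\<exists>b\<in>B - Q. le b u"
proof -
  obtain T where T: "T \<subseteq> B" "u \<in> joins le P T" using assms(1) memR by blast
  have "\<not> T \<subseteq> Q" using jcQ T assms(2) by blast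
  then obtain t where "t \<in> T" "t \<notin> Q" by blast
  thus ?thesis using T unfolding joins_mem_iff by blast
qed

lemma BE: "B - Q \<subseteq> EE" using B2 unfolding EE_def by blast

lemma jnR:
  assumes b: "b \<in> B - Q" and w: "w \<in> Q"
  shows "jn b w \<in> R"
proof -
  have bE: "b \<in> EE" using b BE by blast
  note J = jn_props[OF bE w]
  have wP: "w \<in> P" using w Qsub by blast
  have bP: "b \<in> P" using b BP by blast
  have "jn b w \<in> joins le P {b, w}" using J(1) by blast
  hence j: "jn b w \<in> joins le P {c\<in>atoms le P. \<exists>t\<in>{b, w}. le c t}" using joins_atoms[of "{b, w}"] bP wP by blast
  have "{c\<in>atoms le P. \<exists>t\<in>{b, w}. le c t} \<subseteq> B"
  proof
    fix c assume c: "c \<in> {c\<in>atoms le P. \<exists>t\<in>{b, w}. le c t}"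
    have cP: "c \<in> P" using c atP by blast
    show "c \<in> B"
    proof (cases "le c b")
      case True
      have bat: "b \<in> atoms le P" using b B2 by blast
      have "c = bt \<or> c = b" using atom_le[OF bat cP True] .
      thus ?thesis using atom_ne_bot c b by blast
    next
      case False
      hence "le c w" using c by blast
      hence "c \<in> Q" using Qideal[OF w cP] by blast
      thus ?thesis using c B1 by blast
    qed
  qed
  thus ?thesis using j memR by blast
qed

lemma covR:
  assumes c: "covers le R u v"
  shows "rk le P v = Suc (rk le P u)"
proof -
  have uR: "u \<in> R" and vR: "v \<in> R" and uv: "le u v" "u \<noteq> v"
    and nobetween: "\<not> (\<exists>z\<in>R. lt le u z \<and> lt le z v)"
    using c unfolding covers_def lt_def by auto
  have uP: "u \<in> P" and vP: "v \<in> P" using uR vR RP by auto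
  show ?thesis
  proof (cases "v \<in> Q")
    case True
    have "covers le P u v" unfolding covers_def
    proof (intro conjI uP vP notI)
      show "lt le u v" using uv unfolding lt_def by blast
      assume "\<exists>z\<in>P. lt le u z \<and> lt le z v"
      then obtain z where z: "z \<in> P" "lt le u z" "lt le z v" by blast
      have "z \<in> Q" using Qideal[OF True z(1)] z(3) unfolding lt_def by blast
      thus False using nobetween z QR by blast
    qed
    thus ?thesis using cover_rk by blast
  next
    case vQ: False
    note PV = pi_props[OF vP vQ]
    show ?thesis
    proof (cases "u \<in> Q")
      case True
      have upi: "le u (pi v)" using PV(4)[OF True uv(1)] .
      have "pi v \<in> R" using PV(1) QR by blast
      moreover have "pi v \<noteq> v"
      proof
        assume "pi v = v" hence "v \<in> Q" using PV(1) by simp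
        thus False using vQ by simp
      qed
      ultimately have "u = pi v" using nobetween upi PV(2) unfolding lt_def by blast
      thus ?thesis using PV(3) by simp
    next
      case uQ: False
      note PU = pi_props[OF uP uQ]
      obtain b where b: "b \<in> B - Q" "le b u" using R_gen_atom[OF uR uQ] by blast
      have bE: "b \<in> EE" using b BE by blast
      have bP: "b \<in> P" using b BP by blast
      have bv: "le b v" using ltrans[OF bP uP vP b(2) uv(1)] .
      have u_eq: "jn b (pi u) = u" using jn_pi[OF uP uQ bE b(2)] .
      have v_eq: "jn b (pi v) = v" using jn_pi[OF vP vQ bE bv] .
      have pipi: "le (pi u) (pi v)" using pi_lt[OF uP uQ vP vQ uv(1)] .
      have pine: "pi u \<noteq> pi v" using u_eq v_eq uv(2) by metis
      have piuP: "pi u \<in> P" and pivP: "pi v \<in> P" using PU(1) PV(1) Qsub by auto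
      obtain w where w: "covers le P (pi u) w" "le w (pi v)"
        using cover_exists[OF piuP pivP pipi pine] by blast
      have wP: "w \<in> P" using w(1) unfolding covers_def by blast
      have wQ: "w \<in> Q" using Qideal[OF PV(1) wP w(2)] .
      note J = jn_props[OF bE wQ]
      define z where "z = jn b w"
      have zR: "z \<in> R" unfolding z_def using jnR[OF b(1) wQ] .
      have uz: "le u z"
      proof -
        have "le (pi u) z" using ltrans[OF piuP wP J(3)] w(1) J(5) unfolding z_def covers_def lt_def by blast
        thus ?thesis using jn_props(7)[OF bE PU(1) J(3) J(4)] u_eq unfolding z_def by simp
      qed
      have zv: "le z v"
      proof -
        have "le w v" using ltrans[OF wP pivP vP w(2) PV(2)] .
        thus ?thesis using J(7)[OF vP bv] unfolding z_def by blast
      qed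
      have uzne: "u \<noteq> z"
      proof
        assume "u = z"
        hence "pi u = pi z" by simp
        also have "pi z = w" unfolding z_def using pi_jn[OF bE wQ] .
        finally show False using w(1) unfolding covers_def lt_def by blast
      qed
      have "z = v" using nobetween zR uz zv uzne unfolding lt_def by blast
      hence "rk le P v = Suc (rk le P w)" using J(2) unfolding z_def by simp
      moreover have "rk le P w = Suc (rk le P (pi u))" using cover_rk[OF w(1)] .
      ultimately show ?thesis using PU(3) by simp
    qed
  qed
qed

lemma cchR: "cch le R u x n \<Longrightarrow> rk le P x = rk le P u + n"
  by (induction rule: cch.induct) (auto dest: covR)

lemma minR: "minimal_elems le R = {bt}"
proof -
  have "x = bt" if "x \<in> minimal_elems le R" for x
    using that btR bot_le RP unfolding minimal_elems_def lt_def by blast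
  moreover have "bt \<in> minimal_elems le R"
    using btR bot_unique RP unfolding minimal_elems_def lt_def by blast
  ultimately show ?thesis by blast
qed

lemma botR: "bot le R = bt" unfolding bot_def minR by simp

lemma satR:
  assumes "satchain le R cs x"
  shows "length cs = Suc (rk le P x)"
proof -
  have cs: "cs \<noteq> []" "hd cs = bt" "last cs = x"
    "\<forall>i. Suc i < length cs \<longrightarrow> covers le R (cs ! i) (cs ! Suc i)"
    using assms botR unfolding satchain_def by auto
  have "cch le R bt x (length cs - 1)" using list_cch_gen[OF cs(1) cs(4)] cs(2,3) by simp
  hence "rk le P x = length cs - 1" using cchR rk_bot by simp
  thus ?thesis using cs(1) by simp
qed

lemma posR: "pos le R"
proof
  show "is_poset le R" unfolding is_poset_def
  proof (intro conjI)
    show "finite R" using fin RP finite_subset by blast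
    show "\<exists>!z. z \<in> minimal_elems le R" using minR by simp
    show "\<forall>x\<in>R. le x x" using RP lrefl by blast
    show "\<forall>x\<in>R. \<forall>y\<in>R. le x y \<and> le y x \<longrightarrow> x = y" using RP lantisym by blast
    show "\<forall>x\<in>R. \<forall>y\<in>R. \<forall>z\<in>R. le x y \<and> le y z \<longrightarrow> le x z"
    proof (intro ballI impI)
      fix x y z assume "x\<in>R" "y\<in>R" "z\<in>R" "le x y \<and> le y z"
      thus "le x z" using ltrans[of x y z] RP by blast
    qed
    show "\<forall>x\<in>R. \<forall>cs ds. satchain le R cs x \<and> satchain le R ds x \<longrightarrow> length cs = length ds"
    proof (intro ballI allI impI)
      fix x cs ds assume "satchain le R cs x \<and> satchain le R ds x"
      thus "length cs = length ds" using satR[of cs x] satR[of ds x] by simp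
    qed
  qed
qed

lemma rkR: assumes "x \<in> R" shows "rk le R x = rk le P x"
proof -
  interpret R: pos le R by (rule posR)
  have "R.bt = bt" unfolding R.bt_def botR ..
  hence "cch le R bt x (rk le R x)" using R.rk_ex[OF assms] by simp
  thus ?thesis using cchR rk_bot by simp
qed

lemma atomsR: "atoms le R = B"
proof
  show "atoms le R \<subseteq> B"
  proof
    fix x assume x: "x \<in> atoms le R"
    have xR: "x \<in> R" and r0: "rk le R x = 1" using x unfolding atoms_def by auto
    have r: "rk le P x = 1" using r0 rkR[OF xR] by simp
    have xP: "x \<in> P" using xR RP by blast
    have xat: "x \<in> atoms le P" using xP r unfolding atoms_def by blast
    obtain T where T: "T \<subseteq> B" "x \<in> joins le P T" using xR memR by blast
    have "T \<noteq> {}"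
    proof
      assume "T = {}" hence "x = bt" using T joins_empty by simp
      thus False using atom_ne_bot xat by blast
    qed
    then obtain t where t: "t \<in> T" by blast
    have tx: "le t x" using T t unfolding joins_mem_iff by blast
    have tP: "t \<in> P" and tat: "t \<in> atoms le P" using t T B2 atP by blast+
    have "t = bt \<or> t = x" using atom_le[OF xat tP tx] .
    thus "x \<in> B" using atom_ne_bot[OF tat] t T by blast
  qed
  show "B \<subseteq> atoms le R"
  proof
    fix b assume b: "b \<in> B"
    have bP: "b \<in> P" and bat: "b \<in> atoms le P" using b B2 atP by blast+
    have "b \<in> joins le P {b}" using joins_self[OF bP] .
    hence bR: "b \<in> R" using memR b by blast
    thus "b \<in> atoms le R" using rkR[OF bR] bat unfolding atoms_def by simp
  qed
qed

lemma joins_R_eq: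
  assumes "T \<subseteq> R" "joins le P T \<subseteq> R"
  shows "joins le R T = joins le P T"
proof
  show "joins le P T \<subseteq> joins le R T"
  proof
    fix j assume j: "j \<in> joins le P T"
    have jj: "j \<in> P" "\<forall>t\<in>T. le t j" "\<forall>s\<in>P. (\<forall>t\<in>T. le t s) \<longrightarrow> le s j \<longrightarrow> s = j"
      using j unfolding joins_mem_iff by auto
    have jR: "j \<in> R" using j assms(2) by blast
    show "j \<in> joins le R T" unfolding joins_def minimal_elems_def upper_bounds_def lt_def
      using jj jR RP by blast
  qed
  show "joins le R T \<subseteq> joins le P T"
  proof
    fix j assume j: "j \<in> joins le R T"
    have jR: "j \<in> R" and jT: "\<forall>t\<in>T. le t j" and jmin: "\<forall>s\<in>R. (\<forall>t\<in>T. le t s) \<longrightarrow> le s j \<longrightarrow> s = j"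
      using j unfolding joins_def minimal_elems_def upper_bounds_def lt_def by auto
    have "j \<in> upper_bounds le P T" using jR jT RP unfolding upper_bounds_def by blast
    from ub_above_join[OF this] obtain j' where j': "j' \<in> joins le P T" "le j' j" by blast
    have "j' \<in> R" using j' assms(2) by blast
    moreover have "\<forall>t\<in>T. le t j'" using j' unfolding joins_mem_iff by blast
    ultimately have "j' = j" using jmin j'(2) by blast
    thus "j \<in> joins le P T" using j' by simp
  qed
qed

lemma gpR: "gp le R Q"
proof -
  interpret R: pos le R by (rule posR)
  show ?thesis
  proof
    show "Q \<subseteq> R" by (rule QR)
    show "\<And>x y. x \<in> Q \<Longrightarrow> y \<in> R \<Longrightarrow> le y x \<Longrightarrow> y \<in> Q" using Qideal RP by blast
    show "Q \<noteq> {}" by (rule Qne)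
    obtain b where b: "b \<in> B" "b \<notin> Q" using B3 by blast
    have "b \<in> R" using b(1) atomsR unfolding atoms_def by blast
    thus "Q \<noteq> R" using b(2) by blast
  next
    fix b w assume b: "b \<in> atoms le R" "b \<notin> Q" and w: "w \<in> Q"
    have bB: "b \<in> B - Q" using b atomsR by blast
    have bE: "b \<in> EE" using bB BE by blast
    note J = jn_props[OF bE w]
    have bR: "b \<in> R" and wR: "w \<in> R" using b w QR unfolding atoms_def by auto
    have "joins le R {b, w} = joins le P {b, w}"
      using joins_R_eq[of "{b, w}"] bR wR J(1) jnR[OF bB w] by auto
    hence "joins le R {b, w} = {jn b w}" using J(1) by simp
    moreover have "rk le R (jn b w) = Suc (rk le R w)" using J(2) rkR jnR[OF bB w] wR by simp
    ultimately show "\<exists>z. joins le R {b, w} = {z} \<and> rk le R z = Suc (rk le R w)" by blast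
  next
    fix x assume x: "x \<in> R" "x \<notin> Q"
    have xP: "x \<in> P" using x RP by blast
    note PI = pi_props[OF xP x(2)]
    have "pi x \<in> R" using PI(1) QR by blast
    hence "rk le R x = Suc (rk le R (pi x))" using rkR x PI(3) by simp
    thus "\<exists>y\<in>Q. le y x \<and> rk le R x = Suc (rk le R y) \<and> (\<forall>q\<in>Q. le q x \<longrightarrow> le q y)"
      using PI by blast
  next
    fix x assume x: "x \<in> R" "x \<notin> Q"
    thus "\<exists>b\<in>atoms le R. b \<notin> Q \<and> le b x" using R_gen_atom atomsR by blast
  qed
qed

lemma subR:
  assumes "a \<in> B"
  shows "subposet_gen le R (atoms le R - {a}) = subposet_gen le P (B - {a})"
proof -
  have e: "joins le R T = joins le P T" if "T \<subseteq> B - {a}" for T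
  proof (rule joins_R_eq)
    show "T \<subseteq> R"
    proof
      fix t assume "t \<in> T"
      hence "t \<in> B" "t \<in> P" using that BP by auto
      thus "t \<in> R" using memR joins_self by blast
    qed
    show "joins le P T \<subseteq> R" using memR that by blast
  qed
  have "{joins le R T | T. T \<subseteq> B - {a} \<and> T \<noteq> {}} = {joins le P T | T. T \<subseteq> B - {a} \<and> T \<noteq> {}}"
    using e by blast
  thus ?thesis unfolding subposet_gen_def atomsR botR bt_def by simp
qed

end


context restr begin

lemma lgeoR: "lgeo le R"
proof -
  interpret R: pos le R by (rule posR)
  show ?thesis
  proof
    fix x assume xR: "x \<in> R"
    have xP: "x \<in> P" using xR RP by blast
    define L where "L = down le R x"
    define M where "M = down le P x"
    have LM: "L \<subseteq> M" unfolding L_def M_def down_def using RP by blast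
    have LP: "L \<subseteq> P" using LM unfolding M_def down_def by blast
    have MP: "M \<subseteq> P" unfolding M_def down_def by blast
    have Lmem: "y \<in> L \<longleftrightarrow> y \<in> R \<and> le y x" for y unfolding L_def down_def by blast
    have Mmem: "y \<in> M \<longleftrightarrow> y \<in> P \<and> le y x" for y unfolding M_def down_def by blast
    have pL: "pos le L" unfolding L_def by (rule R.down_props(3)[OF xR])
    have atL: "atoms le L = {b\<in>B. le b x}" unfolding L_def using R.down_props(5)[OF xR] atomsR by simp
    have atM: "atoms le M = {b\<in>atoms le P. le b x}" unfolding M_def using down_props(5)[OF xP] .
    have lubL: "join le M u v \<in> L \<and> is_lub le L {u, v} (join le M u v)" if u: "u \<in> L" and v: "v \<in> L" for u v
    proof -
      have uR: "u \<in> R" "le u x" and vR: "v \<in> R" "le v x" using u v Lmem by auto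
      have uP: "u \<in> P" and vP: "v \<in> P" using uR vR RP by auto
      define s where "s = join le M u v"
      have uM: "u \<in> M" and vM: "v \<in> M" using uP vP uR vR Mmem by auto
      have S: "is_lub le M {u, v} s" unfolding s_def M_def using join_lub[OF xP] uM vM unfolding M_def by blast
      have sP: "s \<in> P" and sx: "le s x" and us: "le u s" and vs: "le v s"
        using S Mmem unfolding is_lub_def by auto
      obtain Tu where Tu: "Tu \<subseteq> B" "u \<in> joins le P Tu" using uR memR by blast
      obtain Tv where Tv: "Tv \<subseteq> B" "v \<in> joins le P Tv" using vR memR by blast
      have TuP: "Tu \<subseteq> P" and TvP: "Tv \<subseteq> P" using Tu Tv BP by auto
      have sj: "s \<in> joins le P (Tu \<union> Tv)" unfolding joins_mem_iff
      proof (intro conjI ballI impI sP)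
        fix t assume t: "t \<in> Tu \<union> Tv"
        show "le t s"
        proof (cases "t \<in> Tu")
          case True
          have "le t u" using Tu(2) True unfolding joins_mem_iff by blast
          thus ?thesis using ltrans[OF _ uP sP _ us] True TuP by blast
        next
          case False
          hence tv: "t \<in> Tv" using t by blast
          have "le t v" using Tv(2) tv unfolding joins_mem_iff by blast
          thus ?thesis using ltrans[OF _ vP sP _ vs] tv TvP by blast
        qed
      next
        fix s' assume s': "s' \<in> P" "\<forall>t\<in>Tu \<union> Tv. le t s'" "le s' s"
        have us': "le u s'" using JM[OF Tu(2) TuP s'(1) _ sP us s'(3)] s'(2) by blast
        have vs': "le v s'" using JM[OF Tv(2) TvP s'(1) _ sP vs s'(3)] s'(2) by blast
        have "le s' x" using ltrans[OF s'(1) sP xP s'(3) sx] .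
        hence "s' \<in> M" using s'(1) Mmem by blast
        hence "le s s'" using S us' vs' unfolding is_lub_def by blast
        thus "s' = s" using lantisym s'(1) sP s'(3) by blast
      qed
      have "Tu \<union> Tv \<subseteq> B" using Tu Tv by blast
      hence sR: "s \<in> R" using sj memR by blast
      hence sL: "s \<in> L" using sx Lmem by blast
      have "is_lub le L {u, v} s" unfolding is_lub_def
      proof (intro conjI ballI impI sL)
        show "\<And>t. t \<in> {u, v} \<Longrightarrow> le t s" using us vs by blast
        fix w assume w: "w \<in> L" "\<forall>t\<in>{u, v}. le t w"
        have "w \<in> M" using w LM by blast
        thus "le s w" using S w unfolding is_lub_def by blast
      qed
      thus ?thesis using sL unfolding s_def by blast
    qed
    have joinLM: "join le L u v = join le M u v" if "u \<in> L" "v \<in> L" for u v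
      using join_eqI[OF conjunct2[OF lubL[OF that]] LP] .
    interpret L: pos le L by (rule pL)
    have glbL: "\<exists>g. is_glb le L {u, v} g" if "u \<in> L" "v \<in> L" for u v
      using L.lub_imp_glb[OF _ that] lubL by blast
    show "geometric_lattice le (down le R x)"
      unfolding L_def[symmetric] geometric_lattice_def is_lattice_def
    proof (intro conjI ballI)
      show "is_poset le L" by (rule L.ip)
      fix u v assume u: "u \<in> L" and v: "v \<in> L"
      show "\<exists>s. is_lub le L {u, v} s" using lubL[OF u v] by blast
      show "\<exists>s. is_glb le L {u, v} s" using glbL[OF u v] .
      show "covers le L u v \<longleftrightarrow> (\<exists>a\<in>atoms le L. \<not> le a u \<and> v = join le L u a)"
      proof
        assume cv: "covers le L u v"
        have uv: "le u v" "u \<noteq> v" and nob: "\<not> (\<exists>z\<in>L. lt le u z \<and> lt le z v)"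
          using cv unfolding covers_def lt_def by auto
        have uR: "u \<in> R" "le u x" and vR: "v \<in> R" "le v x" using u v Lmem by auto
        have uP: "u \<in> P" and vP: "v \<in> P" using uR vR RP by auto
        obtain Tv where Tv: "Tv \<subseteq> B" "v \<in> joins le P Tv" using vR memR by blast
        have "\<exists>t\<in>Tv. \<not> le t u"
        proof (rule ccontr)
          assume "\<not> (\<exists>t\<in>Tv. \<not> le t u)"
          hence "\<forall>t\<in>Tv. le t u" by blast
          thus False using Tv(2) uP uv unfolding joins_mem_iff by blast
        qed
        then obtain t where t: "t \<in> Tv" "\<not> le t u" by blast
        have tB: "t \<in> B" using t Tv by blast
        have tP: "t \<in> P" using tB BP by blast
        have tv: "le t v" using Tv(2) t unfolding joins_mem_iff by blast
        have tx: "le t x" using ltrans[OF tP vP xP tv vR(2)] .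
        have tat: "t \<in> atoms le L" using atL tB tx by blast
        have tL: "t \<in> L" using tat unfolding atoms_def by blast
        define s where "s = join le L u t"
        have S: "is_lub le L {u, t} s" unfolding s_def joinLM[OF u tL] using lubL[OF u tL] by blast
        have sL: "s \<in> L" and us: "le u s" and ts: "le t s" using S unfolding is_lub_def by auto
        have sv: "le s v" using S v uv(1) tv unfolding is_lub_def by blast
        have usne: "u \<noteq> s" using ts t(2) by blast
        have "s = v"
        proof (rule ccontr)
          assume "s \<noteq> v"
          hence "lt le u s \<and> lt le s v" using us sv usne unfolding lt_def by blast
          thus False using nob sL by blast
        qed
        thus "\<exists>a\<in>atoms le L. \<not> le a u \<and> v = join le L u a" using tat t(2) unfolding s_def by blast
      next
        assume "\<exists>a\<in>atoms le L. \<not> le a u \<and> v = join le L u a"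
        then obtain a where a: "a \<in> atoms le L" "\<not> le a u" "v = join le L u a" by blast
        have aL: "a \<in> L" using a(1) unfolding atoms_def by blast
        have aM: "a \<in> atoms le M" using a(1) atL atM B2 by blast
        have vj: "v = join le M u a" using a(3) joinLM[OF u aL] by simp
        have uM: "u \<in> M" and vM: "v \<in> M" using u v LM by auto
        have cM: "covers le M u v"
          using geo[OF xP] uM vM aM a(2) vj unfolding M_def[symmetric] geometric_lattice_def by blast
        show "covers le L u v" using cM u v LM unfolding covers_def by blast
      qed
    qed
  qed
qed

end


locale oi =
  fixes le :: "'a \<Rightarrow> 'a \<Rightarrow> bool" and f :: "'a \<Rightarrow> 'a" and A B :: "'a set"
  assumes bij: "bij_betw f A B" and leq: "\<And>x y. x \<in> A \<Longrightarrow> y \<in> A \<Longrightarrow> le (f x) (f y) = le x y"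
begin

lemma fA: "f ` A = B" using bij unfolding bij_betw_def by blast
lemma inj: "inj_on f A" using bij unfolding bij_betw_def by blast
lemma fmem: "x \<in> A \<Longrightarrow> f x \<in> B" using fA by blast
lemma feq: "x \<in> A \<Longrightarrow> y \<in> A \<Longrightarrow> f x = f y \<longleftrightarrow> x = y" using inj unfolding inj_on_def by blast

lemma ltq: "x \<in> A \<Longrightarrow> y \<in> A \<Longrightarrow> lt le (f x) (f y) = lt le x y"
  unfolding lt_def using leq feq by blast

lemma restrict: "S \<subseteq> A \<Longrightarrow> oi le f S (f ` S)"
  unfolding oi_def using inj inj_on_subset leq by (metis bij_betw_imageI subset_eq)

lemma inv: "oi le (inv_into A f) B A"
proof
  show "bij_betw (inv_into A f) B A" using bij_betw_inv_into[OF bij] .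
  fix x y assume x: "x \<in> B" and y: "y \<in> B"
  obtain x0 y0 where "x0 \<in> A" "y0 \<in> A" "x = f x0" "y = f y0" using x y fA by blast
  thus "le (inv_into A f x) (inv_into A f y) = le x y"
    using leq inv_into_f_f[OF inj] by simp
qed

lemma covq:
  assumes x: "x \<in> A" and y: "y \<in> A"
  shows "covers le B (f x) (f y) = covers le A x y"
proof -
  have "(\<exists>z\<in>B. lt le (f x) z \<and> lt le z (f y)) = (\<exists>z\<in>A. lt le x z \<and> lt le z y)"
    unfolding fA[symmetric] using ltq x y by auto
  thus ?thesis unfolding covers_def using ltq[OF x y] fmem x y by blast
qed

lemma minq:
  assumes S: "S \<subseteq> A"
  shows "minimal_elems le (f ` S) = f ` minimal_elems le S"
proof -
  have "(\<exists>y\<in>f ` S. lt le y (f x)) = (\<exists>y\<in>S. lt le y x)" if "x \<in> S" for x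
    using ltq S that by auto
  thus ?thesis unfolding minimal_elems_def by auto
qed

lemma maxq:
  assumes S: "S \<subseteq> A"
  shows "maximal_elems le (f ` S) = f ` maximal_elems le S"
proof -
  have "(\<exists>y\<in>f ` S. lt le (f x) y) = (\<exists>y\<in>S. lt le x y)" if "x \<in> S" for x
    using ltq S that by auto
  thus ?thesis unfolding maximal_elems_def by auto
qed

lemma ubq:
  assumes T: "T \<subseteq> A"
  shows "upper_bounds le B (f ` T) = f ` upper_bounds le A T"
proof -
  have "(\<forall>t\<in>f ` T. le t (f u)) = (\<forall>t\<in>T. le t u)" if "u \<in> A" for u
    using leq T that by auto
  thus ?thesis unfolding upper_bounds_def fA[symmetric] by auto
qed

lemma joinsq:
  assumes T: "T \<subseteq> A"
  shows "joins le B (f ` T) = f ` joins le A T"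
  unfolding joins_def ubq[OF T] by (rule minq) (auto simp: upper_bounds_def)

lemma botq:
  assumes u: "\<exists>!z. z \<in> minimal_elems le A"
  shows "bot le B = f (bot le A)" "\<exists>!z. z \<in> minimal_elems le B"
proof -
  obtain z where z: "minimal_elems le A = {z}" using u by auto
  have "minimal_elems le B = {f z}" using minq[of A] z fA by simp
  moreover have "bot le A = z" unfolding bot_def z by simp
  ultimately show "bot le B = f (bot le A)" "\<exists>!z. z \<in> minimal_elems le B" unfolding bot_def by simp_all
qed

lemma satq:
  assumes u: "\<exists>!z. z \<in> minimal_elems le A" and s: "satchain le A cs x"
  shows "satchain le B (map f cs) (f x)"
proof -
  have cs: "cs \<noteq> []" "hd cs = bot le A" "last cs = x" "set cs \<subseteq> A"
    "\<forall>i. Suc i < length cs \<longrightarrow> covers le A (cs ! i) (cs ! Suc i)" using s unfolding satchain_def by auto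
  show ?thesis unfolding satchain_def
  proof (intro conjI allI impI)
    show "map f cs \<noteq> []" using cs by simp
    show "hd (map f cs) = bot le B" using cs botq[OF u] by (simp add: hd_map)
    show "last (map f cs) = f x" using cs by (simp add: last_map)
    show "set (map f cs) \<subseteq> B" using cs fA by auto
    fix i assume i: "Suc i < length (map f cs)"
    have m: "cs ! i \<in> A" "cs ! Suc i \<in> A" using cs(4) i by auto
    show "covers le B (map f cs ! i) (map f cs ! Suc i)"
      using covq[OF m] cs(5) i by simp
  qed
qed

end

lemma oi_satq_inv:
  assumes "oi le f A B" "\<exists>!z. z \<in> minimal_elems le B" "satchain le B cs x"
  shows "satchain le A (map (inv_into A f) cs) (inv_into A f x)"
  using oi.satq[OF oi.inv[OF assms(1)] assms(2,3)] .

context oi begin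

lemma posq:
  assumes p: "is_poset le A"
  shows "is_poset le B"
  unfolding is_poset_def
proof (intro conjI)
  have u: "\<exists>!z. z \<in> minimal_elems le A" using p unfolding is_poset_def by blast
  show "finite B" using p fA unfolding is_poset_def by blast
  show uB: "\<exists>!z. z \<in> minimal_elems le B" using botq[OF u] by blast
  have pr: "\<forall>x\<in>A. le x x" "\<forall>x\<in>A. \<forall>y\<in>A. le x y \<and> le y x \<longrightarrow> x = y"
    using p unfolding is_poset_def by blast+
  show "\<forall>x\<in>B. le x x"
  proof
    fix x assume "x \<in> B"
    then obtain x0 where "x0 \<in> A" "x = f x0" using fA by blast
    thus "le x x" using pr(1) leq by simp
  qed
  show "\<forall>x\<in>B. \<forall>y\<in>B. le x y \<and> le y x \<longrightarrow> x = y"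
  proof (intro ballI impI)
    fix x y assume "x \<in> B" "y \<in> B" and xy: "le x y \<and> le y x"
    then obtain x0 y0 where xy0: "x0 \<in> A" "y0 \<in> A" "x = f x0" "y = f y0" using fA by blast
    have "le x0 y0" "le y0 x0" using xy xy0 leq by auto
    hence "x0 = y0" using pr(2) xy0 by blast
    thus "x = y" using xy0 by simp
  qed
  show "\<forall>x\<in>B. \<forall>y\<in>B. \<forall>z\<in>B. le x y \<and> le y z \<longrightarrow> le x z"
  proof (intro ballI impI)
    fix x y z assume "x \<in> B" "y \<in> B" "z \<in> B" and xyz: "le x y \<and> le y z"
    then obtain x0 y0 z0 where xyz0: "x0 \<in> A" "y0 \<in> A" "z0 \<in> A" "x = f x0" "y = f y0" "z = f z0" using fA by blast
    have "le x0 y0" "le y0 z0" using xyz xyz0 leq by auto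
    hence "le x0 z0" using p xyz0 unfolding is_poset_def by blast
    thus "le x z" using xyz0 leq by simp
  qed
  show "\<forall>x\<in>B. \<forall>cs ds. satchain le B cs x \<and> satchain le B ds x \<longrightarrow> length cs = length ds"
  proof (intro ballI allI impI)
    fix x cs ds assume x: "x \<in> B" and c: "satchain le B cs x \<and> satchain le B ds x"
    let ?g = "inv_into A f"
    have oiA: "oi le f A B" by (rule oi_axioms)
    have "satchain le A (map ?g cs) (?g x)" using oi_satq_inv[OF oiA uB] c by blast
    moreover have "satchain le A (map ?g ds) (?g x)" using oi_satq_inv[OF oiA uB] c by blast
    moreover have "?g x \<in> A"
    proof -
      have "x \<in> f ` A" using x fA by simp
      thus ?thesis by (rule inv_into_into)
    qed
    ultimately have "length (map ?g cs) = length (map ?g ds)"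
      using p unfolding is_poset_def by (meson)
    thus "length cs = length ds" by simp
  qed
qed

lemma cchq: "cch le A u y n \<Longrightarrow> u \<in> A \<Longrightarrow> cch le B (f u) (f y) n"
proof (induction rule: cch.induct)
  case (cch0 u) show ?case by (rule cch.cch0)
next
  case (cchS u y n x)
  have "y \<in> A" "x \<in> A" using cchS.hyps(2) unfolding covers_def by auto
  hence "covers le B (f y) (f x)" using covq cchS.hyps(2) by blast
  from cch.cchS[OF cchS.IH[OF cchS.prems] this] show ?case .
qed

lemma rkq:
  assumes p: "is_poset le A" and x: "x \<in> A"
  shows "rk le B (f x) = rk le A x"
proof -
  interpret PA: pos le A using p by unfold_locales
  interpret PB: pos le B using posq[OF p] by unfold_locales
  have u: "\<exists>!z. z \<in> minimal_elems le A" using p unfolding is_poset_def by blast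
  have "cch le B (f PA.bt) (f x) (rk le A x)" using cchq[OF PA.rk_ex[OF x] PA.bot_in] .
  moreover have "f PA.bt = PB.bt" unfolding PA.bt_def PB.bt_def using botq[OF u] by simp
  ultimately show ?thesis using PB.rk_cch by simp
qed

lemma rankq:
  assumes p: "is_poset le A"
  shows "rank le B = rank le A"
proof -
  have e1: "rk le B ` B = rk le B ` (f ` A)" by (simp only: fA)
  have e2: "rk le B ` (f ` A) = (\<lambda>x. rk le B (f x)) ` A" by (rule image_image)
  have e3: "(\<lambda>x. rk le B (f x)) ` A = rk le A ` A" by (rule image_cong[OF refl]) (simp add: rkq[OF p])
  have "rk le B ` B = rk le A ` A" using e1 e2 e3 by simp
  thus ?thesis unfolding rank_def by simp
qed

lemma atomsq:
  assumes p: "is_poset le A"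
  shows "atoms le B = f ` atoms le A"
proof (rule set_eqI)
  fix z show "z \<in> atoms le B \<longleftrightarrow> z \<in> f ` atoms le A"
  proof
    assume z: "z \<in> atoms le B"
    hence zB: "z \<in> B" and r: "rk le B z = 1" unfolding atoms_def by auto
    obtain z0 where z0: "z0 \<in> A" "z = f z0" using zB fA by blast
    have "rk le A z0 = 1" using r rkq[OF p z0(1)] z0(2) by simp
    thus "z \<in> f ` atoms le A" using z0 unfolding atoms_def by blast
  next
    assume "z \<in> f ` atoms le A"
    then obtain z0 where z0: "z0 \<in> A" "rk le A z0 = 1" "z = f z0" unfolding atoms_def by blast
    have "rk le B z = 1" using z0 rkq[OF p z0(1)] by simp
    thus "z \<in> atoms le B" using z0 fmem unfolding atoms_def by blast
  qed
qed

lemma lubq: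
  assumes L: "L \<subseteq> A" and T: "T \<subseteq> L" and s: "s \<in> L"
  shows "is_lub le (f ` L) (f ` T) (f s) = is_lub le L T s"
proof -
  have sA: "s \<in> A" using s L by blast
  have TA: "T \<subseteq> A" using T L by blast
  have "(\<forall>t\<in>f ` T. le t (f s)) = (\<forall>t\<in>T. le t s)" using leq TA sA by auto
  moreover have "(\<forall>u\<in>f ` L. (\<forall>t\<in>f ` T. le t u) \<longrightarrow> le (f s) u) = (\<forall>u\<in>L. (\<forall>t\<in>T. le t u) \<longrightarrow> le s u)"
  proof -
    have "(\<forall>t\<in>f ` T. le t (f u)) = (\<forall>t\<in>T. le t u)" if "u \<in> L" for u
    proof -
      have uA: "u \<in> A" using that L by blast
      show ?thesis using leq TA uA by auto
    qed
    moreover have "le (f s) (f u) = le s u" if "u \<in> L" for u using leq L sA that by auto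
    ultimately show ?thesis by auto
  qed
  ultimately show ?thesis unfolding is_lub_def using s by auto
qed

lemma glbq:
  assumes L: "L \<subseteq> A" and T: "T \<subseteq> L" and s: "s \<in> L"
  shows "is_glb le (f ` L) (f ` T) (f s) = is_glb le L T s"
proof -
  have sA: "s \<in> A" using s L by blast
  have TA: "T \<subseteq> A" using T L by blast
  have "(\<forall>t\<in>f ` T. le (f s) t) = (\<forall>t\<in>T. le s t)" using leq TA sA by auto
  moreover have "(\<forall>u\<in>f ` L. (\<forall>t\<in>f ` T. le u t) \<longrightarrow> le u (f s)) = (\<forall>u\<in>L. (\<forall>t\<in>T. le u t) \<longrightarrow> le u s)"
  proof -
    have "(\<forall>t\<in>f ` T. le (f u) t) = (\<forall>t\<in>T. le u t)" if "u \<in> L" for u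
    proof -
      have uA: "u \<in> A" using that L by blast
      show ?thesis using leq TA uA by auto
    qed
    moreover have "le (f u) (f s) = le u s" if "u \<in> L" for u using leq L sA that by auto
    ultimately show ?thesis by auto
  qed
  ultimately show ?thesis unfolding is_glb_def using s by auto
qed

lemma downq: assumes x: "x \<in> A" shows "down le B (f x) = f ` down le A x"
proof (rule set_eqI)
  fix z show "z \<in> down le B (f x) \<longleftrightarrow> z \<in> f ` down le A x"
  proof
    assume "z \<in> down le B (f x)"
    hence z: "z \<in> B" "le z (f x)" unfolding down_def by auto
    obtain z0 where z0: "z0 \<in> A" "z = f z0" using z fA by blast
    have "le z0 x" using z z0 leq x by simp
    thus "z \<in> f ` down le A x" using z0 unfolding down_def by blast
  next
    assume "z \<in> f ` down le A x"
    then obtain z0 where z0: "z0 \<in> A" "le z0 x" "z = f z0" unfolding down_def by blast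
    thus "z \<in> down le B (f x)" using leq x fmem unfolding down_def by auto
  qed
qed

lemma upq: assumes x: "x \<in> A" shows "up le B (f x) = f ` up le A x"
proof (rule set_eqI)
  fix z show "z \<in> up le B (f x) \<longleftrightarrow> z \<in> f ` up le A x"
  proof
    assume "z \<in> up le B (f x)"
    hence z: "z \<in> B" "le (f x) z" unfolding up_def by auto
    obtain z0 where z0: "z0 \<in> A" "z = f z0" using z fA by blast
    have "le x z0" using z z0 leq x by simp
    thus "z \<in> f ` up le A x" using z0 unfolding up_def by blast
  next
    assume "z \<in> f ` up le A x"
    then obtain z0 where z0: "z0 \<in> A" "le x z0" "z = f z0" unfolding up_def by blast
    thus "z \<in> up le B (f x)" using leq x fmem unfolding up_def by auto
  qed
qed

lemma joinq:
  assumes p: "is_poset le A" and L: "L \<subseteq> A" and uv: "u \<in> L" "v \<in> L"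
    and ex: "\<exists>s. is_lub le L {u, v} s"
  shows "join le (f ` L) (f u) (f v) = f (join le L u v)" "join le L u v \<in> L"
    "is_lub le L {u, v} (join le L u v)"
proof -
  interpret PA: pos le A using p by unfold_locales
  interpret PB: pos le B using posq[OF p] by unfold_locales
  obtain s where s: "is_lub le L {u, v} s" using ex by blast
  have js: "join le L u v = s" using PA.join_eqI[OF s L] .
  have sL: "s \<in> L" using s unfolding is_lub_def by blast
  have uvL: "{u, v} \<subseteq> L" using uv by blast
  have "is_lub le (f ` L) (f ` {u, v}) (f s)" using iffD2[OF lubq[OF L uvL sL] s] .
  hence l1: "is_lub le (f ` L) {f u, f v} (f s)" by simp
  have fLB: "f ` L \<subseteq> B" using L fA by blast
  have "join le (f ` L) (f u) (f v) = f s" using PB.join_eqI[OF l1 fLB] .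
  thus "join le (f ` L) (f u) (f v) = f (join le L u v)" "join le L u v \<in> L" "is_lub le L {u, v} (join le L u v)"
    using js sL s by auto
qed

lemma geoq:
  assumes g: "geometric_lattice le A"
  shows "geometric_lattice le B"
proof -
  have lat: "is_lattice le A" using g unfolding geometric_lattice_def by blast
  have p: "is_poset le A" using lat unfolding is_lattice_def by blast
  have exl: "\<exists>s. is_lub le A {x, y} s" "\<exists>s. is_glb le A {x, y} s" if "x \<in> A" "y \<in> A" for x y
    using lat that unfolding is_lattice_def by blast+
  have cov: "covers le A x y \<longleftrightarrow> (\<exists>a\<in>atoms le A. \<not> le a x \<and> y = join le A x a)" if "x \<in> A" "y \<in> A" for x y
    using g that unfolding geometric_lattice_def by blast
  have atA: "atoms le A \<subseteq> A" unfolding atoms_def by blast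
  show ?thesis unfolding geometric_lattice_def is_lattice_def
  proof (intro conjI ballI)
    show "is_poset le B" using posq[OF p] .
    fix x' y' assume x': "x' \<in> B" and y': "y' \<in> B"
    obtain x y where xy: "x \<in> A" "y \<in> A" "x' = f x" "y' = f y" using x' y' fA by blast
    show "\<exists>s. is_lub le B {x', y'} s"
    proof -
      obtain s where s: "is_lub le A {x, y} s" using exl(1)[OF xy(1,2)] by blast
      have sA: "s \<in> A" using s unfolding is_lub_def by blast
      have "is_lub le (f ` A) (f ` {x, y}) (f s)" using lubq[of A "{x,y}" s] s sA xy by blast
      thus ?thesis using xy fA by auto
    qed
    show "\<exists>s. is_glb le B {x', y'} s"
    proof -
      obtain s where s: "is_glb le A {x, y} s" using exl(2)[OF xy(1,2)] by blast
      have sA: "s \<in> A" using s unfolding is_glb_def by blast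
      have "is_glb le (f ` A) (f ` {x, y}) (f s)" using glbq[of A "{x,y}" s] s sA xy by blast
      thus ?thesis using xy fA by auto
    qed
    have jq: "join le B (f x) (f a) = f (join le A x a)" "join le A x a \<in> A" if "a \<in> A" for a
      using joinq(1,2)[OF p _ xy(1) that exl(1)[OF xy(1) that]] fA by auto
    have "covers le B x' y' = covers le A x y" using covq xy by simp
    also have "\<dots> = (\<exists>a\<in>atoms le A. \<not> le a x \<and> y = join le A x a)" using cov xy by blast
    also have "\<dots> = (\<exists>a\<in>atoms le A. \<not> le (f a) (f x) \<and> f y = f (join le A x a))"
    proof -
      have "(\<not> le a x \<and> y = join le A x a) = (\<not> le (f a) (f x) \<and> f y = f (join le A x a))" if "a \<in> atoms le A" for a
        using that atA leq xy feq jq(2) by blast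
      thus ?thesis by blast
    qed
    also have "\<dots> = (\<exists>a\<in>atoms le A. \<not> le (f a) x' \<and> y' = join le B x' (f a))"
    proof -
      have "(\<not> le (f a) (f x) \<and> f y = f (join le A x a)) = (\<not> le (f a) x' \<and> y' = join le B x' (f a))"
        if "a \<in> atoms le A" for a using jq(1)[of a] that atA xy by auto
      thus ?thesis by blast
    qed
    also have "\<dots> = (\<exists>a'\<in>atoms le B. \<not> le a' x' \<and> y' = join le B x' a')"
      unfolding atomsq[OF p] by simp
    finally show "covers le B x' y' \<longleftrightarrow> (\<exists>a\<in>atoms le B. \<not> le a x' \<and> y' = join le B x' a)" .
  qed
qed

lemma lgq:
  assumes lg: "locally_geometric le A"
  shows "locally_geometric le B"
  unfolding locally_geometric_def
proof (intro conjI ballI)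
  have p: "is_poset le A" using lg unfolding locally_geometric_def by blast
  show "is_poset le B" using posq[OF p] .
  fix x' assume x': "x' \<in> B"
  obtain x where x: "x \<in> A" "x' = f x" using x' fA by blast
  have D: "down le A x \<subseteq> A" unfolding down_def by blast
  interpret R: oi le f "down le A x" "f ` down le A x" using restrict[OF D] .
  have "geometric_lattice le (down le A x)" using lg x unfolding locally_geometric_def by blast
  hence "geometric_lattice le (f ` down le A x)" using R.geoq by blast
  thus "geometric_lattice le (down le B x')" using downq x by simp
qed

lemma mobq:
  assumes p: "is_poset le A" and x: "x \<in> A" and y: "y \<in> A"
  shows "mobius le B (f x) (f y) = mobius le A x y"
proof -
  interpret PA: pos le A using p by unfold_locales
  interpret PB: pos le B using posq[OF p] by unfold_locales
  let ?g = "inv_into A f"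
  have gf: "?g (f z) = z" if "z \<in> A" for z using inv_into_f_f[OF inj that] .
  define m' where "m' u v = (if u \<in> B \<and> v \<in> B then mobius le A (?g u) (?g v) else 0)" for u v
  have m'f: "m' (f u) (f v) = mobius le A u v" if "u \<in> A" "v \<in> A" for u v
    unfolding m'_def using that fmem gf by simp
  have "is_mobius le B m'" unfolding is_mobius_def
  proof (intro conjI allI impI ballI)
    fix u v assume "u \<notin> B \<or> v \<notin> B" thus "m' u v = 0" unfolding m'_def by auto
  next
    fix u' v' assume u': "u' \<in> B" and v': "v' \<in> B"
    obtain u v where uv: "u \<in> A" "v \<in> A" "u' = f u" "v' = f v" using u' v' fA by blast
    have S: "{z\<in>B. le (f u) z \<and> lt le z (f v)} = f ` {z\<in>A. le u z \<and> lt le z v}"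
    proof (rule set_eqI)
      fix z show "z \<in> {z\<in>B. le (f u) z \<and> lt le z (f v)} \<longleftrightarrow> z \<in> f ` {z\<in>A. le u z \<and> lt le z v}"
      proof
        assume "z \<in> {z\<in>B. le (f u) z \<and> lt le z (f v)}"
        hence z: "z \<in> B" "le (f u) z" "lt le z (f v)" by auto
        obtain z0 where z0: "z0 \<in> A" "z = f z0" using z fA by blast
        have "le u z0" "lt le z0 v" using z z0 leq ltq uv by auto
        thus "z \<in> f ` {z\<in>A. le u z \<and> lt le z v}" using z0 by blast
      next
        assume "z \<in> f ` {z\<in>A. le u z \<and> lt le z v}"
        then obtain z0 where z0: "z0 \<in> A" "le u z0" "lt le z0 v" "z = f z0" by blast
        thus "z \<in> {z\<in>B. le (f u) z \<and> lt le z (f v)}" using leq ltq uv fmem by auto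
      qed
    qed
    have inj': "inj_on f {z\<in>A. le u z \<and> lt le z v}" by (rule inj_on_subset[OF inj]) auto
    have "(\<Sum>z\<in>{z\<in>B. le (f u) z \<and> lt le z (f v)}. m' (f u) z) = (\<Sum>z\<in>{z\<in>A. le u z \<and> lt le z v}. m' (f u) (f z))"
      unfolding S by (rule sum.reindex[OF inj', unfolded comp_def])
    also have "\<dots> = (\<Sum>z\<in>{z\<in>A. le u z \<and> lt le z v}. mobius le A u z)"
      by (rule sum.cong[OF refl]) (use m'f uv in auto)
    finally have sums: "(\<Sum>z\<in>{z\<in>B. le (f u) z \<and> lt le z (f v)}. m' (f u) z) = (\<Sum>z\<in>{z\<in>A. le u z \<and> lt le z v}. mobius le A u z)" .
    have rec: "mobius le A u v = (if u = v then 1 else if lt le u v then - (\<Sum>z\<in>{z\<in>A. le u z \<and> lt le z v}. mobius le A u z) else 0)"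
      using PA.mobius_is uv unfolding is_mobius_def by blast
    show "m' u' v' = (if u' = v' then 1 else if lt le u' v' then - (\<Sum>z\<in>{z\<in>B. le u' z \<and> lt le z v'}. m' u' z) else 0)"
      unfolding uv(3,4) m'f[OF uv(1,2)] sums using rec feq[OF uv(1,2)] ltq[OF uv(1,2)] by simp
  qed
  hence "mobius le B = m'" using PB.mobius_unique[OF PB.mobius_is] by blast
  thus ?thesis using m'f x y by simp
qed

lemma charq:
  assumes p: "is_poset le A"
  shows "charpoly le B = charpoly le A"
proof -
  have u: "\<exists>!z. z \<in> minimal_elems le A" using p unfolding is_poset_def by blast
  interpret PA: pos le A using p by unfold_locales
  have bA: "bot le A \<in> A" using PA.bot_in unfolding PA.bt_def .
  have "charpoly le B = (\<Sum>x\<in>f ` A. monom (mobius le B (bot le B) x) (rank le B - rk le B x))"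
    unfolding charpoly_def fA ..
  also have "\<dots> = (\<Sum>x\<in>A. monom (mobius le B (bot le B) (f x)) (rank le B - rk le B (f x)))"
    by (rule sum.reindex[OF inj, unfolded comp_def])
  also have "\<dots> = (\<Sum>x\<in>A. monom (mobius le A (bot le A) x) (rank le A - rk le A x))"
    by (rule sum.cong[OF refl]) (simp add: botq(1)[OF u] mobq[OF p bA] rankq[OF p] rkq[OF p])
  finally show ?thesis unfolding charpoly_def .
qed

lemma subgenq:
  assumes u: "\<exists>!z. z \<in> minimal_elems le A" and C: "C \<subseteq> A"
  shows "subposet_gen le B (f ` C) = f ` subposet_gen le A C"
proof -
  have "\<Union>{joins le B T | T. T \<subseteq> f ` C \<and> T \<noteq> {}} = f ` \<Union>{joins le A T | T. T \<subseteq> C \<and> T \<noteq> {}}"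
  proof
    show "\<Union>{joins le B T | T. T \<subseteq> f ` C \<and> T \<noteq> {}} \<subseteq> f ` \<Union>{joins le A T | T. T \<subseteq> C \<and> T \<noteq> {}}"
    proof
      fix z assume "z \<in> \<Union>{joins le B T | T. T \<subseteq> f ` C \<and> T \<noteq> {}}"
      then obtain T where T: "T \<subseteq> f ` C" "T \<noteq> {}" "z \<in> joins le B T" by blast
      obtain T0 where T0: "T0 \<subseteq> C" "T = f ` T0" using T(1) subset_image_iff by metis
      have "T0 \<noteq> {}" using T0 T(2) by blast
      moreover have "z \<in> f ` joins le A T0" using joinsq[of T0] T0 C T(3) by blast
      ultimately show "z \<in> f ` \<Union>{joins le A T | T. T \<subseteq> C \<and> T \<noteq> {}}" using T0(1) by blast
    qed
    show "f ` \<Union>{joins le A T | T. T \<subseteq> C \<and> T \<noteq> {}} \<subseteq> \<Union>{joins le B T | T. T \<subseteq> f ` C \<and> T \<noteq> {}}"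
    proof
      fix z assume "z \<in> f ` \<Union>{joins le A T | T. T \<subseteq> C \<and> T \<noteq> {}}"
      then obtain T z0 where T: "T \<subseteq> C" "T \<noteq> {}" "z0 \<in> joins le A T" "z = f z0" by blast
      have "z \<in> joins le B (f ` T)" using joinsq[of T] T C by blast
      moreover have "f ` T \<subseteq> f ` C" "f ` T \<noteq> {}" using T by auto
      ultimately show "z \<in> \<Union>{joins le B T | T. T \<subseteq> f ` C \<and> T \<noteq> {}}" by blast
    qed
  qed
  thus ?thesis unfolding subposet_gen_def botq(1)[OF u] by simp
qed

end

lemma inductive_is_poset: "inductive_poset le P \<Longrightarrow> is_poset le P"
proof (induction rule: inductive_poset.induct)
  case (base z)
  have min: "minimal_elems le {z} = {z}" unfolding minimal_elems_def lt_def by auto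
  show ?case unfolding is_poset_def
  proof (intro conjI)
    show "\<exists>!za. za \<in> minimal_elems le {z}" using min by simp
    show "\<forall>x\<in>{z}. \<forall>cs ds. satchain le {z} cs x \<and> satchain le {z} ds x \<longrightarrow> length cs = length ds"
    proof (intro ballI allI impI)
      fix x cs ds assume "x \<in> {z}" and c: "satchain le {z} cs x \<and> satchain le {z} ds x"
      have l1: "length xs = 1" if s: "satchain le {z} xs x" for xs
      proof (rule ccontr)
        assume "length xs \<noteq> 1"
        moreover have "xs \<noteq> []" using s unfolding satchain_def by blast
        ultimately have "Suc 0 < length xs" by (cases xs) auto
        hence "covers le {z} (xs ! 0) (xs ! Suc 0)" using s unfolding satchain_def by blast
        thus False unfolding covers_def lt_def by auto
      qed
      show "length cs = length ds" using l1 c by simp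
    qed
  qed (use base in auto)
next
  case (step P a) thus ?case unfolding locally_geometric_def by blast
qed

lemma inductive_transport:
  assumes "inductive_poset le A" "oi le f A B"
  shows "inductive_poset le B"
  using assms
proof (induction arbitrary: f B rule: inductive_poset.induct)
  case (base z)
  interpret oi le f "{z}" B by (rule base.prems)
  have "B = {f z}" using fA by simp
  moreover have "le (f z) (f z)" using leq base.hyps by simp
  ultimately show ?case using inductive_poset.base by simp
next
  case (step P a)
  interpret oi le f P B by (rule step.prems)
  have p: "is_poset le P" using step.hyps(1) unfolding locally_geometric_def by blast
  have u: "\<exists>!z. z \<in> minimal_elems le P" using p unfolding is_poset_def by blast
  have aP: "a \<in> P" using step.hyps(2) unfolding atoms_def by blast
  have lgB: "locally_geometric le B" using lgq[OF step.hyps(1)] .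
  have faB: "f a \<in> atoms le B" using atomsq[OF p] step.hyps(2) by blast
  have U: "up le P a \<subseteq> P" unfolding up_def by blast
  have upB: "up le B (f a) = f ` up le P a" using upq[OF aP] .
  have oiU: "oi le f (up le P a) (up le B (f a))" using restrict[OF U] upB by simp
  have atP: "atoms le P \<subseteq> P" unfolding atoms_def by blast
  have S: "subposet_gen le P (atoms le P - {a}) \<subseteq> P"
  proof -
    interpret PP: pos le P using p by unfold_locales
    show ?thesis unfolding subposet_gen_def using PP.bot_in PP.joins_sub(2) unfolding PP.bt_def by blast
  qed
  have subB: "subposet_gen le B (atoms le B - {f a}) = f ` subposet_gen le P (atoms le P - {a})"
  proof -
    have "atoms le B - {f a} = f ` (atoms le P - {a})"
      unfolding atomsq[OF p] using inj atP aP by (auto simp: inj_on_def)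
    thus ?thesis using subgenq[OF u, of "atoms le P - {a}"] atP by auto
  qed
  have oiS: "oi le f (subposet_gen le P (atoms le P - {a})) (subposet_gen le B (atoms le B - {f a}))"
    using restrict[OF S] subB by simp
  have i1: "inductive_poset le (up le B (f a))" using step.IH(1)[OF oiU] .
  have i2: "inductive_poset le (subposet_gen le B (atoms le B - {f a}))" using step.IH(2)[OF oiS] .
  have c1: "charpoly le (up le B (f a)) = charpoly le (up le P a)"
    using oi.charq[OF oiU inductive_is_poset[OF step.hyps(3)]] .
  have c2: "charpoly le (subposet_gen le B (atoms le B - {f a})) = charpoly le (subposet_gen le P (atoms le P - {a}))"
    using oi.charq[OF oiS inductive_is_poset[OF step.hyps(4)]] .
  show ?case
    by (rule inductive_poset.step[OF lgB faB i1 i2]) (use c1 c2 step.hyps(5) in simp)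
qed


lemma lgeo_of: assumes "locally_geometric le P" shows "lgeo le P"
proof -
  have a: "is_poset le P" "\<forall>x\<in>P. geometric_lattice le (down le P x)"
    using assms unfolding locally_geometric_def by auto
  show ?thesis unfolding lgeo_def lgeo_axioms_def pos_def using a by blast
qed

lemma lg_of: assumes "lgeo le P" shows "locally_geometric le P"
proof -
  interpret L: lgeo le P by (rule assms)
  have "\<forall>x\<in>P. geometric_lattice le (down le P x)" using L.geo by blast
  thus ?thesis unfolding locally_geometric_def using L.ip by blast
qed

context lgp begin

lemma all_gens:
  assumes IHQ: "inductive_poset le Q"
  shows "card (B - Q) = k \<Longrightarrow> atoms le P \<inter> Q \<subseteq> B \<Longrightarrow> B \<subseteq> atoms le P \<Longrightarrow> inductive_poset le (subposet_gen le P B)"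
proof (induction k arbitrary: B)
  case 0
  have "B - Q \<subseteq> P" using 0(3) atP by blast
  hence finB: "finite (B - Q)" using finite_subset fin by blast
  hence "B - Q = {}" using 0(1) by simp
  hence "subposet_gen le P B = Q" using gen_eq_Q[OF 0(2)] by blast
  thus ?case using IHQ by simp
next
  case (Suc k)
  have B3: "B - Q \<noteq> {}"
  proof
    assume "B - Q = {}" hence "card (B - Q) = 0" by (simp only: card.empty)
    thus False using Suc.prems(1) by simp
  qed
  interpret Rs: restr le P Q B
    by (unfold_locales) (use Suc.prems(2,3) B3 in auto)
  define R where "R = Rs.R"
  obtain a where a: "a \<in> B" "a \<notin> Q" using B3 by blast
  interpret gR: gp le R Q unfolding R_def by (rule Rs.gpR)
  have lgR: "locally_geometric le R" unfolding R_def using lg_of[OF Rs.lgeoR] .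
  have aR: "a \<in> atoms le R" using a Rs.atomsR unfolding R_def by simp
  have aE: "a \<in> gR.EE" using aR a unfolding gR.EE_def by blast
  have oiU: "oi le (gR.jn a) Q (up le R a)"
    using gR.iso_up[OF aE] unfolding oi_def by blast
  have i1: "inductive_poset le (up le R a)" using inductive_transport[OF IHQ oiU] .
  have sub: "subposet_gen le R (atoms le R - {a}) = subposet_gen le P (B - {a})"
    unfolding R_def using Rs.subR[OF a(1)] .
  have cB: "card ((B - {a}) - Q) = k"
  proof -
    have "(B - {a}) - Q = (B - Q) - {a}" by blast
    moreover have "a \<in> B - Q" using a by blast
    moreover have "finite (B - Q)"
    proof -
      have "B - Q \<subseteq> P" using Suc.prems(3) atP by blast
      thus ?thesis using finite_subset fin by blast
    qed
    ultimately show ?thesis using Suc.prems(1) by simp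
  qed
  have i2: "inductive_poset le (subposet_gen le P (B - {a}))"
    using Suc.IH[OF cB] Suc.prems(2,3) a by blast
  have pQ: "is_poset le Q" using gR.Qpos pos.ip by blast
  have c1: "charpoly le (up le R a) = charpoly le Q" using oi.charq[OF oiU pQ] .
  have dv: "charpoly le Q dvd charpoly le (subposet_gen le P (B - {a}))"
  proof (cases "(B - {a}) - Q = {}")
    case True
    have "subposet_gen le P (B - {a}) = Q" using gen_eq_Q[of "B - {a}"] Suc.prems(2) a True by blast
    thus ?thesis by simp
  next
    case False
    interpret Rs2: restr le P Q "B - {a}"
      by (unfold_locales) (use Suc.prems(2,3) a False in auto)
    interpret gR2: gp le Rs2.R Q by (rule Rs2.gpR)
    show ?thesis using gR2.charpoly_dvd unfolding Rs2.R_def .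
  qed
  have "inductive_poset le R"
    by (rule inductive_poset.step[OF lgR aR i1]) (use sub i2 c1 dv in simp_all)
  thus ?case unfolding R_def Rs.R_def .
qed

end

context lgeo begin

lemma gen_all: "subposet_gen le P (atoms le P) = P"
proof
  show "subposet_gen le P (atoms le P) \<subseteq> P"
    unfolding subposet_gen_def using bot_in joins_sub(2) unfolding bt_def by blast
  show "P \<subseteq> subposet_gen le P (atoms le P)"
  proof
    fix x assume x: "x \<in> P"
    show "x \<in> subposet_gen le P (atoms le P)"
    proof (cases "x = bt")
      case True thus ?thesis unfolding subposet_gen_def bt_def by simp
    next
      case False
      let ?T = "{b\<in>atoms le P. le b x}"
      have xj: "x \<in> joins le P ?T" using elem_join_atoms[OF x] .
      have "?T \<noteq> {}"
      proof
        assume e: "?T = {}"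
        have "x \<in> joins le P {}" using xj unfolding e .
        thus False using joins_empty False by simp
      qed
      hence "joins le P ?T \<in> {joins le P T | T. T \<subseteq> atoms le P \<and> T \<noteq> {}}" by blast
      from UnionI[OF this xj] show ?thesis unfolding subposet_gen_def by (rule insertI2)
    qed
  qed
qed

end

lemma main_rank:
  "locally_geometric le P \<Longrightarrow> strictly_supersolvable le P \<Longrightarrow> rank le P = n \<Longrightarrow> inductive_poset le P"
proof (induction n arbitrary: P)
  case 0
  interpret lgeo le P using lgeo_of[OF 0(1)] .
  have "P = {bt}"
  proof
    show "P \<subseteq> {bt}" using rk0 rk_le_rank 0(3) by fastforce
    show "{bt} \<subseteq> P" using bot_in by blast
  qed
  moreover have "le bt bt" using lrefl bot_in by blast
  ultimately show ?case using inductive_poset.base by metis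
next
  case (Suc r)
  have rP: "rank le P = Suc r" using Suc.prems(3) .
  interpret lgeo le P using lgeo_of[OF Suc.prems(1)] .
  obtain Q where Q: "Q 0 = {bot le P}" "Q (rank le P) = P"
    "\<forall>i < rank le P. Q i \<subset> Q (Suc i) \<and> TM_ideal le (Q (Suc i)) (Q i)"
    "\<forall>i \<le> rank le P. rank le (Q i) = i"
    using Suc.prems(2) unfolding strictly_supersolvable_def by blast
  define Q' where "Q' = Q r"
  have QP: "Q (Suc r) = P" using Q(2) Suc.prems(3) by simp
  have tm: "TM_ideal le P Q'" using Q(3) Suc.prems(3) QP unfolding Q'_def by auto
  have psub: "Q' \<subset> P" using Q(3) Suc.prems(3) QP unfolding Q'_def by auto
  have rQ: "rank le Q' = r" using Q(4) Suc.prems(3) unfolding Q'_def by auto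
  have mono: "i \<le> Suc r \<Longrightarrow> Q 0 \<subseteq> Q i" for i
  proof (induction i)
    case 0 thus ?case by simp
  next
    case (Suc i)
    have "i < rank le P" using Suc.prems rP by simp
    hence "Q i \<subseteq> Q (Suc i)" using Q(3) by auto
    thus ?case using Suc by auto
  qed
  have Qne: "Q' \<noteq> {}" using mono[of r] Q(1) unfolding Q'_def by auto
  have oi': "order_ideal le P Q'" using tm unfolding TM_ideal_def M_ideal_def by blast
  have Qsub: "Q' \<subseteq> P" and Qid: "\<forall>x\<in>Q'. \<forall>y\<in>P. le y x \<longrightarrow> y \<in> Q'" using oi' unfolding order_ideal_def by blast+
  have rkP: "rank le P = Suc (rank le Q')" using rQ Suc.prems(3) by simp
  have gpP: "gp le P Q'" and jcP: "join_closed le P Q'" using tm_gp[OF tm Qne _ rkP] psub by auto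
  have lgpP: "lgp le P Q'" unfolding lgp_def lgp_axioms_def using jcP gpP lgeo_axioms by blast
  interpret lgp le P Q' by (rule lgpP)
  have pQ: "pos le Q'" using Qpos .
  have downQ: "down le Q' x = down le P x" if "x \<in> Q'" for x
    using that Qid Qsub unfolding down_def by blast
  have lgQ: "locally_geometric le Q'" unfolding locally_geometric_def
    using pos.ip[OF pQ] geo downQ Qsub by auto
  have bQ: "bot le Q' = bot le P" using Qbot unfolding bt_def .
  have ssQ: "strictly_supersolvable le Q'" unfolding strictly_supersolvable_def
  proof (intro exI[of _ Q] conjI)
    show "Q 0 = {bot le Q'}" using Q(1) bQ by simp
    show "Q (rank le Q') = Q'" using rQ unfolding Q'_def by simp
    show "\<forall>i<rank le Q'. Q i \<subset> Q (Suc i) \<and> TM_ideal le (Q (Suc i)) (Q i)" using Q(3) rQ Suc.prems(3) by auto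
    show "\<forall>i\<le>rank le Q'. rank le (Q i) = i" using Q(4) rQ Suc.prems(3) by auto
  qed
  have IHQ: "inductive_poset le Q'" using Suc.IH[OF lgQ ssQ rQ] .
  have "inductive_poset le (subposet_gen le P (atoms le P))"
    using all_gens[OF IHQ refl] by blast
  thus ?case using gen_all by simp
qed

theorem theorem1p3:
  fixes le :: "'a \<Rightarrow> 'a \<Rightarrow> bool" and P :: "'a set"
  assumes "locally_geometric le P"
    and "strictly_supersolvable le P"
  shows "inductive_poset le P"
  using main_rank[OF assms refl] .


end
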